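(* Let $N\ge3$, $\mu\ge0$, assume (K0) and (F0), and let $p>p_S(\alpha)$. For every $\sigma>0$ there is $\zeta_\sigma>0$ such that $r_0(\zeta)\ge\sigma\zeta^{-1/\theta}$ for all $\zeta>\zeta_\sigma$. Furthermore, for every $\sigma>0$, $$\lim_{\zeta\to\infty}\zeta^{-1}\big|u(\sigma\zeta^{-1/\theta},\zeta)-\bar u(\sigma\zeta^{-1/\theta},\zeta)\big|=0,\qquad \lim_{\zeta\to\infty}\zeta^{-1-1/\theta}\big|u_r(\sigma\zeta^{-1/\theta},\zeta)-\bar u_r(\sigma\zeta^{-1/\theta},\zeta)\big|=0.$$
   Context: (K0): $K:(0,\infty)\to(0,\infty)$ is continuous and $K(r)=(k_0+o(1))r^{\alpha}$ as $r\to0$ for some $\alpha>-2$, $k_0>0$. (F0): $f:(0,\infty)\to[0,\infty)$ is continuous, not identically zero, and $f(r)=O(r^{\nu})$ as $r\to0$ for some $\nu>-2$. $p_S(\alpha)=\frac{N+2+2\alpha}{N-2}$, $\theta:=\frac{2+\alpha}{p-1}$. For $\zeta>0$, $u(\cdot,\zeta)$ denotes the (unique) regular solution of $u''+\frac{N-1}{r}u'+K(r)\max\{u,0\}^p+\mu f(r)=0$ with $u(0)=\zeta$, i.e. the continuous solution on $[0,\infty)$ of $u(r)=\zeta-\int_0^r\frac{s^{2-N}-r^{2-N}}{N-2}s^{N-1}\big(K(s)\max\{u(s),0\}^p+\mu f(s)\big)ds$; $r_0(\zeta)\in(0,\infty]$ is its first zero ($r_0(\zeta)=\infty$ if $u(\cdot,\zeta)>0$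 on $(0,\infty)$). $\bar u(\cdot,\zeta)$ denotes the solution of $\bar u''+\frac{N-1}{r}\bar u'+k_0r^{\alpha}\bar u^p=0$ for $r>0$, $\bar u(0)=\zeta$ (regular at $0$), which is positive on $(0,\infty)$ and satisfies $\bar u(r,\zeta)=\zeta\bar u(\zeta^{1/\theta}r,1)$. *)

theory Defs
  imports "HOL-Analysis.Analysis" "HOL-Library.Landau_Symbols"
begin

text \<open>v is a regular solution (on [0,\<infinity>)) of
  v'' + (N-1)/r v' + g(r, v) = 0, v(0) = zeta, in the integral form
  v(r) = zeta - int_0^r (s^(2-N) - r^(2-N))/(N-2) s^(N-1) g(s, v(s)) ds.\<close>
definition regular_sol ::
  "nat \<Rightarrow> (real \<Rightarrow> real \<Rightarrow> real) \<Rightarrow> real \<Rightarrow> (real \<Rightarrow> real) \<Rightarrow> bool" where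
  "regular_sol N g zeta v \<longleftrightarrow>
     continuous_on {0..} v \<and> v 0 = zeta \<and>
     (\<forall>r>0. ((\<lambda>s. (s powr (2 - real N) - r powr (2 - real N)) / (real N - 2)
                  * s powr (real N - 1) * g s (v s))
             has_integral (zeta - v r)) {0..r})"

end

theory Submission
  imports Defs
begin

lemma integrable_dom:
  fixes F :: "real \<Rightarrow> real"
  assumes cont: "continuous_on {0<..<t} F"
    and bd: "\<And>s. 0 < s \<Longrightarrow> s < t \<Longrightarrow> \<bar>F s\<bar> \<le> C * s powr g"
    and g: "g > -1" and t: "t \<ge> 0"
  shows "F integrable_on {0..t}"
proof -
  have "(\<lambda>s. C * s powr g) integrable_on {0..t}"
    using integrable_on_powr_from_0[OF g t] by (rule integrable_on_mult_right)
  hence gi: "(\<lambda>s. C * s powr g) integrable_on {0<..<t}"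
    using integrable_on_Icc_iff_Ioo by blast
  have "F integrable_on {0<..<t}"
    by (rule measurable_bounded_by_integrable_imp_integrable_real[OF
          continuous_imp_measurable_on_sets_lebesgue[OF cont] gi]) (auto intro: bd)
  thus ?thesis using integrable_on_Icc_iff_Ioo by blast
qed

lemma cont_powr0:
  assumes "q > 0"
  shows "continuous_on {0..} (\<lambda>t::real. t powr q)"
  using assms by (intro continuous_on_powr') (auto intro: continuous_intros)

lemma gronwall_powr:
  fixes \<phi> :: "real \<Rightarrow> real"
  assumes R: "R > 0" and g: "g > -1" and c: "c \<ge> 0"
    and cont: "continuous_on {0..R} \<phi>"
    and ineq: "\<And>t. 0 \<le> t \<Longrightarrow> t \<le> R \<Longrightarrow> \<phi> t \<le> E + integral {0..t} (\<lambda>s. c * s powr g * \<phi> s)"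
    and t: "0 \<le> t" "t \<le> R"
  shows "\<phi> t \<le> E * exp (c * t powr (g+1) / (g+1))"
proof -
  define F where "F = (\<lambda>s. c * s powr g * \<phi> s)"
  have "bounded (\<phi> ` {0..R})"
    using compact_imp_bounded[OF compact_continuous_image[OF cont compact_Icc]] .
  then obtain M where M0: "\<forall>x\<in>\<phi> ` {0..R}. norm x \<le> M"
    unfolding bounded_iff by blast
  have M: "\<bar>\<phi> s\<bar> \<le> M" if "s \<in> {0..R}" for s
    using M0 that by auto
  have Fc: "continuous_on {0<..<R} F"
    unfolding F_def
    by (intro continuous_intros continuous_on_subset[OF cont]) auto
  have FI: "F integrable_on {0..R}"
  proof (rule integrable_dom[OF Fc _ g])
    fix s assume s: "0 < s" "s < R"
    have "\<bar>F s\<bar> = c * s powr g * \<bar>\<phi> s\<bar>" using c s by (simp add: F_def abs_mult)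
    also have "\<dots> \<le> c * s powr g * M" using M[of s] s c by (intro mult_left_mono) auto
    finally show "\<bar>F s\<bar> \<le> (c * M) * s powr g" by (simp add: algebra_simps)
  qed (use R in auto)
  define I where "I = (\<lambda>t. integral {0..t} F)"
  define A where "A = (\<lambda>t::real. c * t powr (g+1) / (g+1))"
  define \<Psi> where "\<Psi> = (\<lambda>t. exp (- A t) * (E + I t))"
  have Icont: "continuous_on {0..R} I"
    unfolding I_def by (rule indefinite_integral_continuous_1[OF FI])
  have Acont: "continuous_on {0..R} A"
    unfolding A_def using g
    by (intro continuous_intros continuous_on_subset[OF cont_powr0]) auto
  have Psicont: "continuous_on {0..t} \<Psi>"
    unfolding \<Psi>_def using t
    by (intro continuous_intros continuous_on_subset[OF Icont] continuous_on_subset[OF Acont]) auto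
  have der: "\<exists>y. (\<Psi> has_real_derivative y) (at x) \<and> y \<le> 0" if x: "0 < x" "x < t" for x
  proof -
    have xR: "x \<in> {0<..<R}" using x t by auto
    have "continuous (at x) F"
      using Fc xR by (simp add: continuous_on_eq_continuous_at)
    hence "((\<lambda>u. integral {0..u} F) has_vector_derivative F x) (at x within ({0..R} - {}))"
      using x t by (intro integral_has_vector_derivative_continuous_at[OF FI])
         (auto intro: continuous_at_imp_continuous_within)
    hence "(I has_vector_derivative F x) (at x within {0<..<R})"
      unfolding I_def by (rule has_vector_derivative_within_subset) auto
    hence "(I has_vector_derivative F x) (at x)"
      using xR by (metis at_within_open open_greaterThanLessThan)
    hence dI: "(I has_real_derivative F x) (at x)"
      by (simp add: has_real_derivative_iff_has_vector_derivative)
    have dA: "(A has_real_derivative c * x powr g) (at x)"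
    proof -
      have "((\<lambda>x. x powr (g+1)) has_real_derivative (g+1) * x powr (g+1-1)) (at x)"
        using x by (intro has_real_derivative_powr) auto
      hence "(A has_real_derivative c * ((g+1) * x powr (g+1-1)) / (g+1)) (at x)"
        unfolding A_def by (intro DERIV_cdivide DERIV_cmult)
      thus ?thesis using g by simp
    qed
    have "(\<Psi> has_real_derivative (exp (- A x) * (- (c * x powr g)) * (E + I x) + exp (- A x) * F x)) (at x)"
    proof -
      have dE: "((\<lambda>t. exp (- A t)) has_real_derivative exp (- A x) * (- (c * x powr g))) (at x)"
        by (rule DERIV_fun_exp[OF DERIV_minus[OF dA]])
      have dEI: "((\<lambda>t. E + I t) has_real_derivative 0 + F x) (at x)"
        by (intro DERIV_add DERIV_const dI)
      show ?thesis using DERIV_mult[OF dE dEI] by (simp add: \<Psi>_def mult.commute)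
    qed
    moreover have "exp (- A x) * (- (c * x powr g)) * (E + I x) + exp (- A x) * F x
        = exp (- A x) * (c * x powr g) * (\<phi> x - (E + I x))"
      by (simp add: F_def algebra_simps)
    moreover have "\<dots> \<le> 0"
      using ineq[of x] x t c unfolding I_def F_def
      by (intro mult_nonneg_nonpos) auto
    ultimately show ?thesis by auto
  qed
  have "\<Psi> t \<le> \<Psi> 0"
    using DERIV_nonpos_imp_decreasing_open[OF t(1) der Psicont] by blast
  also have "\<Psi> 0 = E" by (simp add: \<Psi>_def A_def I_def)
  finally have "exp (- A t) * (E + I t) \<le> E" by (simp add: \<Psi>_def)
  hence "E + I t \<le> E * exp (A t)"
    by (simp add: exp_minus field_simps)
  thus ?thesis using ineq[OF t] unfolding I_def F_def A_def by simp
qed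

lemma powr_lip_aux:
  fixes a b p M :: real
  assumes p: "p \<ge> 1" and ab: "0 \<le> b" "b \<le> a" "a \<le> M"
  shows "a powr p - b powr p \<le> p * M powr (p-1) * (a - b)"
proof (cases "b = a")
  case True thus ?thesis by simp
next
  case False
  hence lt: "b < a" using ab by simp
  have cont: "continuous_on {b..a} (\<lambda>z. z powr p)"
    using p ab by (intro continuous_on_subset[OF cont_powr0]) auto
  have dif: "(\<lambda>z. z powr p) differentiable (at x)" if "b < x" "x < a" for x
    using has_real_derivative_powr[of x p] that ab real_differentiable_def by fastforce
  obtain l z where z: "b < z" "z < a" "((\<lambda>z. z powr p) has_real_derivative l) (at z)"
    and eq: "a powr p - b powr p = (a - b) * l"
    using MVT[OF lt cont dif] by blast
  have "l = p * z powr (p - 1)"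
    using DERIV_unique[OF z(3) has_real_derivative_powr[of z p]] z ab by auto
  also have "\<dots> \<le> p * M powr (p - 1)"
    using z ab p by (intro mult_left_mono powr_mono2) auto
  finally show ?thesis unfolding eq using lt by (simp add: mult.commute mult_left_mono)
qed

lemma m_lip:
  fixes x y p M :: real
  assumes p: "p \<ge> 1" and M: "M > 0" and xy: "x \<le> M" "y \<le> M"
  shows "\<bar>max x 0 powr p - max y 0 powr p\<bar> \<le> p * M powr (p-1) * \<bar>x - y\<bar>"
proof -
  have gen: "\<bar>a powr p - b powr p\<bar> \<le> p * M powr (p-1) * \<bar>a - b\<bar>"
    if "0 \<le> a" "a \<le> M" "0 \<le> b" "b \<le> M" for a b :: real
  proof (cases "b \<le> a")
    case True
    have "b powr p \<le> a powr p" using True that p by (intro powr_mono2) auto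
    thus ?thesis using powr_lip_aux[OF p that(3) True that(2)] True by simp
  next
    case False
    have "a powr p \<le> b powr p" using False that p by (intro powr_mono2) auto
    thus ?thesis using powr_lip_aux[of p a b M] p that False by simp
  qed
  have "\<bar>max x 0 - max y 0\<bar> \<le> \<bar>x - y\<bar>" by auto
  moreover have "0 \<le> p * M powr (p-1)" using p M by simp
  ultimately have "p * M powr (p-1) * \<bar>max x 0 - max y 0\<bar> \<le> p * M powr (p-1) * \<bar>x - y\<bar>"
    by (rule mult_left_mono)
  thus ?thesis using gen[of "max x 0" "max y 0"] xy M by auto
qed

lemma int_deriv:
  fixes F :: "real \<Rightarrow> real"
  assumes FI: "F integrable_on {0..R}" and Fc: "continuous_on {0<..<R} F"
    and x: "0 < x" "x < R"
  shows "((\<lambda>u. integral {0..u} F) has_real_derivative F x) (at x)"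
proof -
  have xR: "x \<in> {0<..<R}" using x by auto
  have "continuous (at x) F"
    using Fc xR by (simp add: continuous_on_eq_continuous_at)
  hence "((\<lambda>u. integral {0..u} F) has_vector_derivative F x) (at x within ({0..R} - {}))"
    using x by (intro integral_has_vector_derivative_continuous_at[OF FI])
       (auto intro: continuous_at_imp_continuous_within)
  hence "((\<lambda>u. integral {0..u} F) has_vector_derivative F x) (at x within {0<..<R})"
    by (rule has_vector_derivative_within_subset) auto
  hence "((\<lambda>u. integral {0..u} F) has_vector_derivative F x) (at x)"
    using xR by (metis at_within_open open_greaterThanLessThan)
  thus ?thesis
    by (simp add: has_real_derivative_iff_has_vector_derivative)
qed

lemma regsol_props:
  fixes N :: nat and g :: "real \<Rightarrow> real \<Rightarrow> real" and v :: "real \<Rightarrow> real"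
  assumes N: "N \<ge> 3" and sol: "regular_sol N g z v" and R: "R > 0"
    and hc: "continuous_on {0<..} (\<lambda>s. g s (v s))"
    and hb: "\<And>s. 0 < s \<Longrightarrow> s \<le> R \<Longrightarrow> \<bar>g s (v s)\<bar> \<le> C * s powr b" and b: "b > -2"
  shows "\<And>r. 0 \<le> r \<Longrightarrow> r \<le> R \<Longrightarrow> (\<lambda>s. s * g s (v s)) integrable_on {0..r}"
    and "\<And>r. 0 \<le> r \<Longrightarrow> r \<le> R \<Longrightarrow> (\<lambda>s. s powr (real N - 1) * g s (v s)) integrable_on {0..r}"
    and "\<And>r. 0 < r \<Longrightarrow> r \<le> R \<Longrightarrow> v r = z - (integral {0..r} (\<lambda>s. s * g s (v s))
            - r powr (2 - real N) * integral {0..r} (\<lambda>s. s powr (real N - 1) * g s (v s))) / (real N - 2)"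
    and "\<And>r. 0 < r \<Longrightarrow> r < R \<Longrightarrow> (v has_real_derivative
            - (r powr (1 - real N) * integral {0..r} (\<lambda>s. s powr (real N - 1) * g s (v s)))) (at r)"
proof -
  define h where "h = (\<lambda>s. g s (v s))"
  define n where "n = real N"
  have n: "n \<ge> 3" using N by (simp add: n_def)
  have hc': "continuous_on {0<..<r} h" for r
    using hc unfolding h_def by (rule continuous_on_subset) auto
  have I1: "(\<lambda>s. s * h s) integrable_on {0..r}" if r: "0 \<le> r" "r \<le> R" for r
  proof (rule integrable_dom[where C=C and g="b+1"])
    show "continuous_on {0<..<r} (\<lambda>s. s * h s)" by (intro continuous_intros hc')
    fix s assume s: "0 < s" "s < r"
    have "\<bar>s * h s\<bar> = s * \<bar>h s\<bar>" using s by (simp add: abs_mult)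
    also have "\<dots> \<le> s * (C * s powr b)" using hb[of s] s r by (intro mult_left_mono) (auto simp: h_def)
    also have "\<dots> = C * s powr (b+1)" using s by (simp add: powr_add)
    finally show "\<bar>s * h s\<bar> \<le> C * s powr (b+1)" .
  qed (use b r in auto)
  have I2: "(\<lambda>s. s powr (n - 1) * h s) integrable_on {0..r}" if r: "0 \<le> r" "r \<le> R" for r
  proof (rule integrable_dom[where C=C and g="b+n-1"])
    show "continuous_on {0<..<r} (\<lambda>s. s powr (n - 1) * h s)"
      by (intro continuous_intros hc') auto
    fix s assume s: "0 < s" "s < r"
    have "\<bar>s powr (n-1) * h s\<bar> = s powr (n-1) * \<bar>h s\<bar>" using s by (simp add: abs_mult)
    also have "\<dots> \<le> s powr (n-1) * (C * s powr b)" using hb[of s] s r by (intro mult_left_mono) (auto simp: h_def)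
    also have "\<dots> = C * s powr (b+n-1)" using s by (simp add: powr_add[symmetric] algebra_simps)
    finally show "\<bar>s powr (n-1) * h s\<bar> \<le> C * s powr (b+n-1)" .
  qed (use b n r in auto)
  show "\<And>r. 0 \<le> r \<Longrightarrow> r \<le> R \<Longrightarrow> (\<lambda>s. s * g s (v s)) integrable_on {0..r}"
    using I1 unfolding h_def .
  show "\<And>r. 0 \<le> r \<Longrightarrow> r \<le> R \<Longrightarrow> (\<lambda>s. s powr (real N - 1) * g s (v s)) integrable_on {0..r}"
    using I2 unfolding h_def n_def .
  have rep: "v r = z - (integral {0..r} (\<lambda>s. s * h s)
            - r powr (2 - n) * integral {0..r} (\<lambda>s. s powr (n - 1) * h s)) / (n - 2)"
    if r: "0 < r" "r \<le> R" for r
  proof -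
    have hI1: "((\<lambda>s. (s powr (2 - n) - r powr (2 - n)) / (n - 2) * s powr (n - 1) * h s)
             has_integral (z - v r)) {0..r}"
      using sol r unfolding regular_sol_def h_def n_def by auto
    have hI2: "((\<lambda>s. (s * h s - r powr (2 - n) * (s powr (n - 1) * h s)) / (n - 2))
        has_integral (integral {0..r} (\<lambda>s. s * h s)
            - r powr (2 - n) * integral {0..r} (\<lambda>s. s powr (n - 1) * h s)) / (n - 2)) {0..r}"
      using I1[of r] I2[of r] r
      by (intro has_integral_divide has_integral_diff has_integral_mult_right integrable_integral) auto
    have eq: "(s powr (2 - n) - r powr (2 - n)) / (n - 2) * s powr (n - 1) * h s
        = (s * h s - r powr (2 - n) * (s powr (n - 1) * h s)) / (n - 2)" if "s \<in> {0..r}" for s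
    proof (cases "s = 0")
      case True thus ?thesis using n by simp
    next
      case False
      hence "s powr (2 - n) * s powr (n - 1) = s" using that by (simp add: powr_add[symmetric])
      thus ?thesis by (simp add: field_simps)
    qed
    have "z - v r = (integral {0..r} (\<lambda>s. s * h s)
            - r powr (2 - n) * integral {0..r} (\<lambda>s. s powr (n - 1) * h s)) / (n - 2)"
      using has_integral_unique[OF hI1 has_integral_eq[OF _ hI2]] eq by metis
    thus ?thesis by simp
  qed
  show "\<And>r. 0 < r \<Longrightarrow> r \<le> R \<Longrightarrow> v r = z - (integral {0..r} (\<lambda>s. s * g s (v s))
            - r powr (2 - real N) * integral {0..r} (\<lambda>s. s powr (real N - 1) * g s (v s))) / (real N - 2)"
    using rep unfolding h_def n_def .
  fix r assume r: "0 < r" "r < R"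
  define A where "A = (\<lambda>x. integral {0..x} (\<lambda>s. s * h s))"
  define B where "B = (\<lambda>x. integral {0..x} (\<lambda>s. s powr (n - 1) * h s))"
  have dA: "(A has_real_derivative r * h r) (at r)"
    unfolding A_def using I1[of R] R r
    by (intro int_deriv[where R=R]) (auto intro!: continuous_intros hc')
  have dB: "(B has_real_derivative r powr (n - 1) * h r) (at r)"
    unfolding B_def using I2[of R] R r
    by (intro int_deriv[where R=R]) (auto intro!: continuous_intros hc')
  have dP: "((\<lambda>x. x powr (2 - n)) has_real_derivative (2 - n) * r powr (2 - n - 1)) (at r)"
    using r by (intro has_real_derivative_powr)
  have "((\<lambda>x. z - (A x - x powr (2 - n) * B x) / (n - 2)) has_real_derivative
        0 - (r * h r - (r powr (2 - n) * (r powr (n - 1) * h r) + (2 - n) * r powr (2 - n - 1) * B r)) / (n - 2)) (at r)"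
    by (intro DERIV_diff DERIV_const DERIV_cdivide dA DERIV_mult'[OF dP dB])
  moreover have "0 - (r * h r - (r powr (2 - n) * (r powr (n - 1) * h r) + (2 - n) * r powr (2 - n - 1) * B r)) / (n - 2)
      = - (r powr (1 - n) * B r)"
  proof -
    have "r powr (2 - n) * r powr (n - 1) = r" using r by (simp add: powr_add[symmetric])
    moreover have "2 - n - 1 = 1 - n" by simp
    ultimately show ?thesis using n by (simp add: field_simps)
  qed
  ultimately have "((\<lambda>x. z - (A x - x powr (2 - n) * B x) / (n - 2)) has_real_derivative
        - (r powr (1 - n) * B r)) (at r)" by simp
  hence "(v has_real_derivative - (r powr (1 - n) * B r)) (at r)"
    by (rule has_field_derivative_transform_within_open[where S="{0<..<R}"])
       (use r in \<open>auto simp: rep A_def B_def\<close>)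
  thus "(v has_real_derivative
            - (r powr (1 - real N) * integral {0..r} (\<lambda>s. s powr (real N - 1) * g s (v s)))) (at r)"
    unfolding B_def h_def n_def .
qed

lemma regsol_le:
  fixes N :: nat and g :: "real \<Rightarrow> real \<Rightarrow> real" and v :: "real \<Rightarrow> real"
  assumes N: "N \<ge> 3" and sol: "regular_sol N g z v"
    and gnn: "\<And>s. 0 < s \<Longrightarrow> g s (v s) \<ge> 0" and r: "r \<ge> 0"
  shows "v r \<le> z"
proof (cases "r = 0")
  case True thus ?thesis using sol by (simp add: regular_sol_def)
next
  case False
  hence r: "r > 0" using r by simp
  have hI: "((\<lambda>s. (s powr (2 - real N) - r powr (2 - real N)) / (real N - 2)
                  * s powr (real N - 1) * g s (v s)) has_integral (z - v r)) {0..r}"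
    using sol r unfolding regular_sol_def by auto
  have "0 \<le> z - v r"
  proof (rule has_integral_nonneg[OF hI])
    fix s assume s: "s \<in> {0..r}"
    show "0 \<le> (s powr (2 - real N) - r powr (2 - real N)) / (real N - 2) * s powr (real N - 1) * g s (v s)"
    proof (cases "s = 0")
      case True thus ?thesis by simp
    next
      case False
      hence "s > 0" using s by auto
      moreover have "r powr (2 - real N) \<le> s powr (2 - real N)"
        using s \<open>s > 0\<close> N by (intro powr_mono2') auto
      ultimately show ?thesis using N gnn[of s]
        by (intro mult_nonneg_nonneg divide_nonneg_nonneg) auto
    qed
  qed
  thus ?thesis by simp
qed

lemma m_cont:
  fixes v :: "real \<Rightarrow> real"
  assumes "continuous_on S v" "p > 0"
  shows "continuous_on S (\<lambda>s. max (v s) 0 powr p)"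
  using assms by (intro continuous_on_powr' continuous_intros) auto

lemma first_zero:
  fixes v :: "real \<Rightarrow> real"
  assumes vc: "continuous_on {0..} v" and v0: "v 0 > 0" and r0: "r0 \<ge> 0" "v r0 \<le> 0"
  obtains R where "R > 0" "v R = 0" "\<And>x. 0 \<le> x \<Longrightarrow> x < R \<Longrightarrow> v x > 0"
proof -
  define Z where "Z = {x \<in> {0..r0}. v x = 0}"
  have vc': "continuous_on {0..x} v" for x using vc by (rule continuous_on_subset) auto
  obtain x0 where "0 \<le> x0" "x0 \<le> r0" "v x0 = 0"
    using IVT2'[of v r0 0 0, OF r0(2) _ r0(1) vc'] v0 by auto
  hence Zne: "Z \<noteq> {}" unfolding Z_def by auto
  have Zc: "closed Z" unfolding Z_def by (intro continuous_closed_preimage_constant vc') auto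
  have Zb: "bdd_below Z" unfolding Z_def by (auto intro: bdd_belowI[of _ 0])
  define R where "R = Inf Z"
  have RZ: "R \<in> Z" unfolding R_def by (rule closed_contains_Inf[OF Zne Zb Zc])
  have Rle: "R \<le> x" if "x \<in> Z" for x unfolding R_def by (rule cInf_lower[OF that Zb])
  have vR: "v R = 0" and R0: "R \<ge> 0" and Rr0: "R \<le> r0" using RZ unfolding Z_def by auto
  have Rpos: "R > 0" using vR R0 v0 by (cases "R = 0") auto
  have pos: "v x > 0" if x: "0 \<le> x" "x < R" for x
  proof (rule ccontr)
    assume "\<not> v x > 0"
    then obtain y where "0 \<le> y" "y \<le> x" "v y = 0"
      using IVT2'[of v x 0 0, OF _ _ x(1) vc'] v0 by auto
    hence "y \<in> Z" unfolding Z_def using x Rr0 by auto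
    hence "R \<le> y" by (rule Rle)
    thus False using \<open>y \<le> x\<close> x by simp
  qed
  show ?thesis using that[OF Rpos vR pos] .
qed

lemma powr_eq_mult: "a = b + c \<Longrightarrow> (x::real) powr a = x powr b * x powr c"
  by (simp add: powr_add)

lemma model_pos:
  fixes N :: nat and k0 alpha p z :: real and v :: "real \<Rightarrow> real"
  assumes N: "N \<ge> 3" and alpha: "alpha > -2" and k0: "k0 > 0"
    and p: "p > (real N + 2 + 2*alpha) / (real N - 2)" and z: "z > 0"
    and sol: "regular_sol N (\<lambda>s x. k0 * s powr alpha * max x 0 powr p) z v"
    and r: "r \<ge> 0"
  shows "v r > 0"
proof (rule ccontr)
  assume nr: "\<not> v r > 0"
  define n where "n = real N"
  have n: "n \<ge> 3" using N by (simp add: n_def)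
  have pn: "p * (n - 2) > n + 2 + 2 * alpha"
    using p n by (simp add: n_def pos_divide_less_eq)
  have p1: "p > 1"
  proof -
    have "(n - 2) * 1 < p * (n - 2)" using pn alpha by simp
    thus ?thesis using n by (simp add: mult.commute)
  qed
  have vc: "continuous_on {0..} v" and v0: "v 0 = z" using sol by (auto simp: regular_sol_def)
  define h where "h = (\<lambda>s. k0 * s powr alpha * max (v s) 0 powr p)"
  have hc: "continuous_on {0<..} h"
    unfolding h_def using p1
    by (intro continuous_intros m_cont continuous_on_subset[OF vc]) auto
  have hnn: "h s \<ge> 0" for s using k0 by (simp add: h_def)
  have vle: "v x \<le> z" if "x \<ge> 0" for x
    using regsol_le[OF N sol _ that] hnn unfolding h_def by simp
  have mle: "max (v s) 0 powr q \<le> z powr q" if "s \<ge> 0" "q > 0" for s q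
    using vle[OF that(1)] z that by (intro powr_mono2) auto
  have hb: "\<bar>h s\<bar> \<le> (k0 * z powr p) * s powr alpha" if "0 < s" for s
  proof -
    have "\<bar>h s\<bar> = k0 * s powr alpha * max (v s) 0 powr p" using hnn[of s] by (simp add: h_def)
    also have "\<dots> \<le> k0 * s powr alpha * z powr p"
      using mle[of s p] that p1 k0 by (intro mult_left_mono) auto
    finally show ?thesis by (simp add: algebra_simps)
  qed
  obtain R where R: "R > 0" "v R = 0" and vpos: "\<And>x. 0 \<le> x \<Longrightarrow> x < R \<Longrightarrow> v x > 0"
    using first_zero[OF vc _ r] nr v0 z by auto
  note props = regsol_props[OF N sol, of "R+1" "k0 * z powr p" alpha]
  define B where "B = (\<lambda>x. integral {0..x} (\<lambda>s. s powr (n-1) * h s))"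
  define w where "w = (\<lambda>x. - (x powr (1-n) * B x))"
  have I2: "(\<lambda>s. s powr (n - 1) * h s) integrable_on {0..x}" if "0 \<le> x" "x \<le> R + 1" for x
    using props(2)[OF _ hc[unfolded h_def] hb[unfolded h_def] alpha] that R unfolding h_def n_def by auto
  have dv: "(v has_real_derivative w x) (at x)" if "0 < x" "x < R + 1" for x
    using props(4)[OF _ hc[unfolded h_def] hb[unfolded h_def] alpha] that R unfolding w_def B_def h_def n_def by auto
  have dB: "(B has_real_derivative x powr (n-1) * h x) (at x)" if x: "0 < x" "x < R + 1" for x
    unfolding B_def using I2[of "R+1"] R x
    by (intro int_deriv[where R="R+1"]) (auto intro!: continuous_intros continuous_on_subset[OF hc])
  have dw: "(w has_real_derivative (- ((n - 1) / x) * w x - h x)) (at x)" if x: "0 < x" "x < R + 1" for x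
  proof -
    have dP: "((\<lambda>x. x powr (1 - n)) has_real_derivative (1 - n) * x powr (1 - n - 1)) (at x)"
      using x by (intro has_real_derivative_powr)
    have "(w has_real_derivative - (x powr (1 - n) * (x powr (n-1) * h x) + (1 - n) * x powr (1 - n - 1) * B x)) (at x)"
      unfolding w_def by (intro DERIV_minus DERIV_mult'[OF dP dB[OF x]])
    moreover have "x powr (1 - n) * x powr (n - 1) = 1" using x by (simp add: powr_add[symmetric])
    moreover have "x powr (1 - n - 1) = x powr (1 - n) / x"
    proof -
      have "x powr (1 - n - 1) * x powr 1 = x powr (1 - n)" by (simp only: powr_add[symmetric]) simp
      thus ?thesis using x by (simp add: field_simps)
    qed
    moreover have alg: "- (a * (c * H) + (1 - n) * a' * Bx) = - ((n - 1) / x) * (- (a * Bx)) - H"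
      if "a * c = 1" "a' = a / x" for a c a' H Bx
      using that x by (simp add: field_simps)
    ultimately show ?thesis unfolding w_def by metis
  qed
  define m1 where "m1 = (\<lambda>x. max (v x) 0 powr (p + 1))"
  have dm1: "(m1 has_real_derivative (p + 1) * v x powr p * w x) (at x)" if x: "0 < x" "x < R" for x
  proof -
    have vx: "v x > 0" using vpos x by auto
    have "((\<lambda>y. y powr (p + 1)) has_real_derivative (p + 1) * v x powr (p + 1 - 1)) (at (v x))"
      using vx by (intro has_real_derivative_powr)
    hence "((\<lambda>y. v y powr (p + 1)) has_real_derivative (p + 1) * v x powr (p + 1 - 1) * w x) (at x)"
      using DERIV_chain2[OF _ dv[OF x(1)], of "\<lambda>y. y powr (p + 1)"] x by simp
    hence "((\<lambda>y. v y powr (p + 1)) has_real_derivative (p + 1) * v x powr p * w x) (at x)" by simp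
    thus ?thesis
      by (rule has_field_derivative_transform_within_open[where S="{0<..<R}"])
         (use x vpos in \<open>auto simp: m1_def\<close>)
  qed
  define P where "P = (\<lambda>x. x powr n * (w x * w x) / 2 + k0 * x powr (n + alpha) * m1 x / (p + 1)
                            + (n - 2) / 2 * (x powr (n - 1) * (v x * w x)))"
  have dP: "\<exists>D. (P has_real_derivative D) (at x) \<and> D < 0" if x: "0 < x" "x < R" for x
  proof -
    have xR: "x < R + 1" using x by simp
    define W' where "W' = - ((n - 1) / x) * w x - h x"
    have dw': "(w has_real_derivative W') (at x)" unfolding W'_def by (rule dw[OF x(1) xR])
    have dpn: "((\<lambda>x. x powr n) has_real_derivative n * x powr (n - 1)) (at x)"
      by (rule has_real_derivative_powr[OF x(1)])
    have dpna: "((\<lambda>x. x powr (n + alpha)) has_real_derivative (n + alpha) * x powr (n + alpha - 1)) (at x)"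
      by (rule has_real_derivative_powr[OF x(1)])
    have dpn1: "((\<lambda>x. x powr (n - 1)) has_real_derivative (n - 1) * x powr (n - 1 - 1)) (at x)"
      by (rule has_real_derivative_powr[OF x(1)])
    have T1: "((\<lambda>x. x powr n * (w x * w x) / 2) has_real_derivative
        (x powr n * (w x * W' + W' * w x) + n * x powr (n - 1) * (w x * w x)) / 2) (at x)"
      by (rule DERIV_cdivide[OF DERIV_mult'[OF dpn DERIV_mult'[OF dw' dw']]])
    have T2: "((\<lambda>x. k0 * x powr (n + alpha) * m1 x / (p + 1)) has_real_derivative
        (k0 * x powr (n + alpha) * ((p + 1) * v x powr p * w x) + k0 * ((n + alpha) * x powr (n + alpha - 1)) * m1 x) / (p + 1)) (at x)"
      by (rule DERIV_cdivide[OF DERIV_mult'[OF DERIV_cmult[OF dpna] dm1[OF x]]])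
    have T3: "((\<lambda>x. (n - 2) / 2 * (x powr (n - 1) * (v x * w x))) has_real_derivative
        (n - 2) / 2 * (x powr (n - 1) * (v x * W' + w x * w x) + (n - 1) * x powr (n - 1 - 1) * (v x * w x))) (at x)"
      by (rule DERIV_cmult[OF DERIV_mult'[OF dpn1 DERIV_mult'[OF dv[OF x(1) xR] dw']]])
    have raw: "(P has_real_derivative
        (x powr n * (w x * W' + W' * w x) + n * x powr (n - 1) * (w x * w x)) / 2
        + (k0 * x powr (n + alpha) * ((p + 1) * v x powr p * w x) + k0 * ((n + alpha) * x powr (n + alpha - 1)) * m1 x) / (p + 1)
        + (n - 2) / 2 * (x powr (n - 1) * (v x * W' + w x * w x) + (n - 1) * x powr (n - 1 - 1) * (v x * w x))) (at x)"
      unfolding P_def by (rule DERIV_add[OF DERIV_add[OF T1 T2] T3])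
    have vx: "v x > 0" using vpos x by auto
    have e1: "x powr n = x * x powr (n - 1)"
      using x powr_eq_mult[of n 1 "n - 1" x] by simp
    have e2: "x powr (n + alpha) = x * x powr (n - 1) * x powr alpha"
      using x powr_eq_mult[of "n + alpha" 1 "n - 1 + alpha" x] powr_eq_mult[of "n - 1 + alpha" "n - 1" alpha x]
      by simp
    have e3: "x powr (n + alpha - 1) = x powr (n - 1) * x powr alpha"
      using powr_eq_mult[of "n + alpha - 1" "n - 1" alpha x] by simp
    have e4: "x powr (n - 1 - 1) = x powr (n - 1) / x"
    proof -
      have "x powr (n - 1 - 1) * x powr 1 = x powr (n - 1)" by (simp only: powr_add[symmetric]) simp
      thus ?thesis using x by (simp add: field_simps)
    qed
    have e5: "m1 x = v x powr p * v x"
      using vx by (simp add: m1_def powr_add)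
    have e6: "h x = k0 * x powr alpha * v x powr p"
      using vx by (simp add: h_def)
    have alg: "(Pn * (W * W'' + W'' * W) + n * X * (W * W)) / 2
        + (k0 * Pna * ((p + 1) * V * W) + k0 * ((n + alpha) * Pna1) * M) / (p + 1)
        + (n - 2) / 2 * (X * (vv * W'' + W * W) + (n - 1) * Pn2 * (vv * W))
        = k0 * Pna1 * M * ((n + alpha) / (p + 1) - (n - 2) / 2)"
      if "Pn = x * X" "Pna = x * X * xa" "Pna1 = X * xa" "Pn2 = X / x" "M = V * vv"
         "W'' = - ((n - 1) / x) * W - k0 * xa * V"
      for Pn Pna Pna1 Pn2 X xa V vv W W'' M
    proof -
      have xn: "x \<noteq> 0" and pn1: "p + 1 \<noteq> 0" using x p1 by auto
      show ?thesis unfolding that using xn pn1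
        by (simp add: divide_simps) (simp add: algebra_simps)
    qed
    have "(P has_real_derivative
        k0 * x powr (n + alpha - 1) * m1 x * ((n + alpha) / (p + 1) - (n - 2) / 2)) (at x)"
      using raw alg[OF e1 e2 e3 e4 e5 W'_def[unfolded e6]] by simp
    moreover have "k0 * x powr (n + alpha - 1) * m1 x * ((n + alpha) / (p + 1) - (n - 2) / 2) < 0"
    proof -
      have "(n + alpha) / (p + 1) < (n - 2) / 2"
        using pn p1 n by (simp add: field_simps)
      moreover have "m1 x > 0" using vpos[of x] x by (simp add: m1_def)
      ultimately show ?thesis using k0 x by (simp add: mult_pos_neg)
    qed
    ultimately show ?thesis by blast
  qed
  have wc: "continuous_on {0<..<R+1} w"
    using dw by (auto simp: continuous_on_eq_continuous_at intro!: DERIV_isCont)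
  have vc2: "continuous_on {0<..<R+1} v"
    using dv by (auto simp: continuous_on_eq_continuous_at intro!: DERIV_isCont)
  have m1c: "continuous_on {0<..<R+1} m1"
    unfolding m1_def using p1 by (intro m_cont vc2) auto
  have Pc: "continuous_on {0<..<R+1} P"
    unfolding P_def using p1 by (intro continuous_intros wc vc2 m1c) auto
  define Cb where "Cb = k0 * z powr p / (n + alpha)"
  have Bb: "0 \<le> B t \<and> B t \<le> Cb * t powr (n + alpha)" if t: "0 \<le> t" "t \<le> R + 1" for t
  proof
    show "0 \<le> B t" unfolding B_def using I2[OF t] hnn
      by (intro integral_nonneg) auto
    have "B t \<le> integral {0..t} (\<lambda>s. (k0 * z powr p) * s powr (n - 1 + alpha))"
      unfolding B_def
    proof (rule integral_le[OF I2[OF t]])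
      show "(\<lambda>s. (k0 * z powr p) * s powr (n - 1 + alpha)) integrable_on {0..t}"
        using n alpha t by (intro integrable_on_mult_right integrable_on_powr_from_0) auto
      fix s assume s: "s \<in> {0..t}"
      show "s powr (n - 1) * h s \<le> k0 * z powr p * s powr (n - 1 + alpha)"
      proof (cases "s = 0")
        case True thus ?thesis by simp
      next
        case False
        hence "s > 0" using s by auto
        hence "s powr (n - 1) * h s \<le> s powr (n - 1) * ((k0 * z powr p) * s powr alpha)"
          using hb[of s] hnn[of s] by (intro mult_left_mono) auto
        also have "\<dots> = k0 * z powr p * s powr (n - 1 + alpha)"
          by (simp add: powr_add)
        finally show ?thesis .
      qed
    qed
    also have "\<dots> = Cb * t powr (n + alpha)"
      using has_integral_powr_from_0[of "n - 1 + alpha" t] n alpha t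
      by (simp add: Cb_def integral_mult_right integral_unique)
    finally show "B t \<le> Cb * t powr (n + alpha)" .
  qed
  have Cb0: "Cb \<ge> 0" using k0 z n alpha by (simp add: Cb_def)
  have wb: "\<bar>w t\<bar> \<le> Cb * t powr (1 + alpha)" if t: "0 < t" "t \<le> R + 1" for t
  proof -
    have "\<bar>w t\<bar> = t powr (1 - n) * B t" using Bb[of t] t by (simp add: w_def abs_mult)
    also have "\<dots> \<le> t powr (1 - n) * (Cb * t powr (n + alpha))"
      using Bb[of t] t by (intro mult_left_mono) auto
    also have "\<dots> = Cb * t powr (1 + alpha)"
      by (simp add: powr_add[symmetric])
    finally show ?thesis .
  qed
  define bnd where "bnd = (\<lambda>t. (Cb * Cb / 2) * t powr (n + 2 + 2 * alpha)
      + (k0 * z powr (p + 1) / (p + 1) + (n - 2) / 2 * z * Cb) * t powr (n + alpha))"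
  have Pb: "P t \<le> bnd t" if t: "0 < t" "t \<le> R" for t
  proof -
    have wt: "\<bar>w t\<bar> \<le> Cb * t powr (1 + alpha)" using wb t by auto
    have vt: "0 \<le> v t" "v t \<le> z" using vpos[of t] R t vle[of t] by (cases "t = R"; auto)+
    have a1: "t powr n * (w t * w t) / 2 \<le> (Cb * Cb / 2) * t powr (n + 2 + 2 * alpha)"
    proof -
      have "w t * w t \<le> (Cb * t powr (1 + alpha)) * (Cb * t powr (1 + alpha))"
        using wt by (metis abs_ge_zero abs_mult_self_eq mult_mono')
      hence "t powr n * (w t * w t) \<le> t powr n * ((Cb * t powr (1 + alpha)) * (Cb * t powr (1 + alpha)))"
        by (intro mult_left_mono) auto
      also have "\<dots> = Cb * Cb * t powr (n + 2 + 2 * alpha)"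
        by (simp add: powr_add[symmetric] algebra_simps)
      finally show ?thesis by simp
    qed
    have a2: "k0 * t powr (n + alpha) * m1 t / (p + 1) \<le> k0 * z powr (p + 1) / (p + 1) * t powr (n + alpha)"
    proof -
      have "m1 t \<le> z powr (p + 1)" unfolding m1_def using mle[of t "p + 1"] t p1 by auto
      hence "k0 * t powr (n + alpha) * m1 t \<le> k0 * t powr (n + alpha) * z powr (p + 1)"
        using k0 by (intro mult_left_mono) auto
      thus ?thesis using p1 by (simp add: divide_right_mono algebra_simps)
    qed
    have a3: "(n - 2) / 2 * (t powr (n - 1) * (v t * w t)) \<le> (n - 2) / 2 * z * Cb * t powr (n + alpha)"
    proof -
      have "v t * w t \<le> z * (Cb * t powr (1 + alpha))"
      proof -
        have "v t * w t \<le> \<bar>v t\<bar> * \<bar>w t\<bar>" by (simp add: abs_mult[symmetric])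
        also have "\<dots> \<le> z * (Cb * t powr (1 + alpha))"
          using vt wt by (intro mult_mono) auto
        finally show ?thesis .
      qed
      hence "t powr (n - 1) * (v t * w t) \<le> t powr (n - 1) * (z * (Cb * t powr (1 + alpha)))"
        by (intro mult_left_mono) auto
      also have "\<dots> = z * Cb * t powr (n + alpha)"
        by (simp add: powr_add[symmetric] algebra_simps)
      finally have "t powr (n - 1) * (v t * w t) \<le> z * Cb * t powr (n + alpha)" .
      hence "(n - 2) / 2 * (t powr (n - 1) * (v t * w t)) \<le> (n - 2) / 2 * (z * Cb * t powr (n + alpha))"
        using n by (intro mult_left_mono) auto
      thus ?thesis by (simp add: mult.assoc)
    qed
    have "bnd t = (Cb * Cb / 2) * t powr (n + 2 + 2 * alpha) + k0 * z powr (p + 1) / (p + 1) * t powr (n + alpha)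
        + (n - 2) / 2 * z * Cb * t powr (n + alpha)"
      unfolding bnd_def by (simp only: distrib_right add.assoc)
    thus ?thesis using a1 a2 a3 unfolding P_def by linarith
  qed
  have lim: "(bnd \<longlongrightarrow> 0) (at_right 0)"
  proof -
    have l: "((\<lambda>t::real. t powr e) \<longlongrightarrow> 0) (at_right 0)" if "e > 0" for e
      using that by (intro tendsto_zero_powrI tendsto_ident_at tendsto_const)
         (auto simp: eventually_at_right_field intro: exI[of _ 1])
    have "(bnd \<longlongrightarrow> (Cb * Cb / 2) * 0 + (k0 * z powr (p + 1) / (p + 1) + (n - 2) / 2 * z * Cb) * 0) (at_right 0)"
      unfolding bnd_def using n alpha by (intro tendsto_intros l) auto
    thus ?thesis by simp
  qed
  have R2: "0 < R / 2" "R / 2 < R" using R by auto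
  have dec: "P b < P a" if ab: "0 < a" "a < b" "b \<le> R" for a b
    using dP ab by (intro DERIV_neg_imp_decreasing_open[OF ab(2)])
      (auto intro!: continuous_on_subset[OF Pc])
  have PR2: "P (R / 2) \<le> 0"
  proof (rule tendsto_le[OF _ lim tendsto_const])
    show "at_right (0::real) \<noteq> bot" by simp
    show "\<forall>\<^sub>F t in at_right 0. P (R / 2) \<le> bnd t"
      unfolding eventually_at_right_field
    proof (intro exI[of _ "R / 2"] conjI allI impI)
      fix t :: real assume "0 < t" "t < R / 2"
      thus "P (R / 2) \<le> bnd t" using dec[of t "R / 2"] Pb[of t] by auto
    qed (use R in auto)
  qed
  have "P R < P (R / 2)" using dec[of "R / 2" R] R by auto
  moreover have "P R \<ge> 0" unfolding P_def m1_def using R by simp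
  ultimately show False using PR2 by simp
qed

lemma kernel_bound:
  fixes n s t :: real
  assumes n: "n > 2" and s: "0 < s" "s \<le> t"
  shows "0 \<le> (s powr (2 - n) - t powr (2 - n)) / (n - 2) * s powr (n - 1)"
    and "(s powr (2 - n) - t powr (2 - n)) / (n - 2) * s powr (n - 1) \<le> s / (n - 2)"
proof -
  have "t powr (2 - n) \<le> s powr (2 - n)" using s n by (intro powr_mono2') auto
  thus "0 \<le> (s powr (2 - n) - t powr (2 - n)) / (n - 2) * s powr (n - 1)"
    using n by (intro mult_nonneg_nonneg divide_nonneg_nonneg) auto
  have eq: "s powr (2 - n) * s powr (n - 1) = s" using s by (simp add: powr_add[symmetric])
  have "(s powr (2 - n) - t powr (2 - n)) / (n - 2) * s powr (n - 1)
      = (s powr (2 - n) * s powr (n - 1) - t powr (2 - n) * s powr (n - 1)) / (n - 2)"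
    by (simp add: algebra_simps)
  also have "\<dots> = (s - t powr (2 - n) * s powr (n - 1)) / (n - 2)" by (simp only: eq)
  also have "\<dots> \<le> s / (n - 2)" using n by (intro divide_right_mono) auto
  finally show "(s powr (2 - n) - t powr (2 - n)) / (n - 2) * s powr (n - 1) \<le> s / (n - 2)" .
qed

lemma compare_sol:
  fixes N :: nat and g1 g2 :: "real \<Rightarrow> real \<Rightarrow> real" and v1 v2 :: "real \<Rightarrow> real"
  assumes N: "N \<ge> 3" and s1: "regular_sol N g1 z v1" and s2: "regular_sol N g2 z v2"
    and R: "R > 0" and alpha: "alpha > -2" and nu: "nu > -2"
    and c: "c \<ge> 0" and e1: "e1 \<ge> 0" and e2: "e2 \<ge> 0"
    and bd: "\<And>s. 0 < s \<Longrightarrow> s \<le> R \<Longrightarrow> \<bar>g1 s (v1 s) - g2 s (v2 s)\<bar>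
               \<le> c * s powr alpha * \<bar>v1 s - v2 s\<bar> + e1 * s powr alpha + e2 * s powr nu"
    and t: "0 \<le> t" "t \<le> R"
  shows "\<bar>v1 t - v2 t\<bar> \<le> (e1 * (R powr (1 + alpha + 1) / (1 + alpha + 1)) + e2 * (R powr (1 + nu + 1) / (1 + nu + 1))) / (real N - 2)
            * exp (c / (real N - 2) * t powr (1 + alpha + 1) / (1 + alpha + 1))"
proof -
  define n where "n = real N"
  have n: "n \<ge> 3" using N by (simp add: n_def)
  define \<phi> where "\<phi> = (\<lambda>s. \<bar>v1 s - v2 s\<bar>)"
  define E where "E = (e1 * (R powr (1 + alpha + 1) / (1 + alpha + 1)) + e2 * (R powr (1 + nu + 1) / (1 + nu + 1))) / (n - 2)"
  have c1: "continuous_on {0..} v1" "v1 0 = z" using s1 by (auto simp: regular_sol_def)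
  have c2: "continuous_on {0..} v2" "v2 0 = z" using s2 by (auto simp: regular_sol_def)
  have phic: "continuous_on {0..R} \<phi>" unfolding \<phi>_def
    by (intro continuous_intros continuous_on_subset[OF c1(1)] continuous_on_subset[OF c2(1)]) auto
  have "bounded (\<phi> ` {0..R})"
    using compact_imp_bounded[OF compact_continuous_image[OF phic compact_Icc]] .
  then obtain M where M0: "\<forall>x\<in>\<phi> ` {0..R}. norm x \<le> M"
    unfolding bounded_iff by blast
  have M: "\<phi> s \<le> M" if "s \<in> {0..R}" for s
    using M0 that by (auto simp: \<phi>_def)
  have phi0: "\<phi> s \<ge> 0" for s by (simp add: \<phi>_def)
  have Iphi: "(\<lambda>s. s powr (1 + alpha) * \<phi> s) integrable_on {0..t'}" if "0 \<le> t'" "t' \<le> R" for t'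
  proof (rule integrable_dom[where C=M and g="1 + alpha"])
    show "continuous_on {0<..<t'} (\<lambda>s. s powr (1 + alpha) * \<phi> s)"
      using that by (intro continuous_intros continuous_on_subset[OF phic]) auto
    fix s assume s: "0 < s" "s < t'"
    have "\<bar>s powr (1 + alpha) * \<phi> s\<bar> = s powr (1 + alpha) * \<phi> s" using phi0[of s] by simp
    also have "\<dots> \<le> s powr (1 + alpha) * M" using M[of s] s that by (intro mult_left_mono) auto
    finally show "\<bar>s powr (1 + alpha) * \<phi> s\<bar> \<le> M * s powr (1 + alpha)" by (simp add: mult.commute)
  qed (use that alpha in auto)
  have ineq: "\<phi> t' \<le> E + integral {0..t'} (\<lambda>s. c / (n - 2) * s powr (1 + alpha) * \<phi> s)"
    if t': "0 \<le> t'" "t' \<le> R" for t'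
  proof (cases "t' = 0")
    case True
    thus ?thesis using c1 c2 e1 e2 R n alpha nu by (simp add: \<phi>_def E_def)
  next
    case False
    hence tp: "t' > 0" using t' by simp
    define K where "K = (\<lambda>s. (s powr (2 - n) - t' powr (2 - n)) / (n - 2) * s powr (n - 1))"
    have h1: "((\<lambda>s. K s * g1 s (v1 s)) has_integral (z - v1 t')) {0..t'}"
      using s1 tp unfolding regular_sol_def K_def n_def by auto
    have h2: "((\<lambda>s. K s * g2 s (v2 s)) has_integral (z - v2 t')) {0..t'}"
      using s2 tp unfolding regular_sol_def K_def n_def by auto
    have hd: "((\<lambda>s. K s * g1 s (v1 s) - K s * g2 s (v2 s)) has_integral (v2 t' - v1 t')) {0..t'}"
      using has_integral_diff[OF h1 h2] by simp
    define bnd where "bnd = (\<lambda>s. c / (n - 2) * s powr (1 + alpha) * \<phi> s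
        + (e1 * s powr (1 + alpha) + e2 * s powr (1 + nu)) / (n - 2))"
    have hb2: "((\<lambda>s. (e1 * s powr (1 + alpha) + e2 * s powr (1 + nu)) / (n - 2)) has_integral
        (e1 * (t' powr (1 + alpha + 1) / (1 + alpha + 1)) + e2 * (t' powr (1 + nu + 1) / (1 + nu + 1))) / (n - 2)) {0..t'}"
      using alpha nu tp
      by (intro has_integral_divide has_integral_add has_integral_mult_right has_integral_powr_from_0) auto
    have hb1: "(\<lambda>s. c / (n - 2) * s powr (1 + alpha) * \<phi> s) integrable_on {0..t'}"
      using integrable_on_mult_right[OF Iphi[OF t'], of "c / (n - 2)"] by (simp add: mult.assoc)
    have bint: "bnd integrable_on {0..t'}"
      unfolding bnd_def using hb1 hb2 by (intro integrable_add) (auto simp: integrable_on_def)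
    have "\<phi> t' = norm (integral {0..t'} (\<lambda>s. K s * g1 s (v1 s) - K s * g2 s (v2 s)))"
      using hd by (simp add: \<phi>_def integral_unique abs_minus_commute)
    also have "\<dots> \<le> integral {0..t'} bnd"
    proof (rule integral_norm_bound_integral[OF _ bint])
      show "(\<lambda>s. K s * g1 s (v1 s) - K s * g2 s (v2 s)) integrable_on {0..t'}"
        using hd by (auto simp: integrable_on_def)
      fix s assume s: "s \<in> {0..t'}"
      show "norm (K s * g1 s (v1 s) - K s * g2 s (v2 s)) \<le> bnd s"
      proof (cases "s = 0")
        case True thus ?thesis using n alpha nu by (simp add: K_def bnd_def)
      next
        case False
        hence sp: "s > 0" using s by auto
        have Kb: "0 \<le> K s" "K s \<le> s / (n - 2)"
          using kernel_bound[of n s t'] n sp s unfolding K_def by auto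
        have "norm (K s * g1 s (v1 s) - K s * g2 s (v2 s)) = K s * \<bar>g1 s (v1 s) - g2 s (v2 s)\<bar>"
          using Kb by (simp add: right_diff_distrib[symmetric] abs_mult)
        also have "\<dots> \<le> (s / (n - 2)) * (c * s powr alpha * \<phi> s + e1 * s powr alpha + e2 * s powr nu)"
        proof (rule mult_mono)
          show "\<bar>g1 s (v1 s) - g2 s (v2 s)\<bar> \<le> c * s powr alpha * \<phi> s + e1 * s powr alpha + e2 * s powr nu"
            using bd[of s] sp s t' unfolding \<phi>_def by auto
        qed (use Kb in auto)
        also have "\<dots> = bnd s"
        proof -
          have alg: "s / d * (c * a * f + e1 * a + e2 * b) = c / d * (s * a) * f + (e1 * (s * a) + e2 * (s * b)) / d"
            if "d \<noteq> 0" for d a b f using that by (simp add: field_simps)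
          have "s powr (1 + alpha) = s * s powr alpha" "s powr (1 + nu) = s * s powr nu"
            using sp by (simp_all add: powr_add)
          thus ?thesis unfolding bnd_def using alg[of "n - 2"] n by simp
        qed
        finally show ?thesis .
      qed
    qed
    also have "integral {0..t'} bnd = integral {0..t'} (\<lambda>s. c / (n - 2) * s powr (1 + alpha) * \<phi> s)
        + (e1 * (t' powr (1 + alpha + 1) / (1 + alpha + 1)) + e2 * (t' powr (1 + nu + 1) / (1 + nu + 1))) / (n - 2)"
    proof -
      obtain I1 where I1: "((\<lambda>s. c / (n - 2) * s powr (1 + alpha) * \<phi> s) has_integral I1) {0..t'}"
        using hb1 by (auto simp: integrable_on_def)
      have "(bnd has_integral I1 + (e1 * (t' powr (1 + alpha + 1) / (1 + alpha + 1)) + e2 * (t' powr (1 + nu + 1) / (1 + nu + 1))) / (n - 2)) {0..t'}"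
        unfolding bnd_def by (rule has_integral_add[OF I1 hb2])
      from integral_unique[OF this] integral_unique[OF I1] show ?thesis by simp
    qed
    also have "\<dots> \<le> integral {0..t'} (\<lambda>s. c / (n - 2) * s powr (1 + alpha) * \<phi> s) + E"
    proof -
      have "t' powr (1 + alpha + 1) \<le> R powr (1 + alpha + 1)" using t' alpha by (intro powr_mono2) auto
      moreover have "t' powr (1 + nu + 1) \<le> R powr (1 + nu + 1)" using t' nu by (intro powr_mono2) auto
      ultimately have "e1 * (t' powr (1 + alpha + 1) / (1 + alpha + 1)) + e2 * (t' powr (1 + nu + 1) / (1 + nu + 1))
          \<le> e1 * (R powr (1 + alpha + 1) / (1 + alpha + 1)) + e2 * (R powr (1 + nu + 1) / (1 + nu + 1))"
        using e1 e2 alpha nu by (intro add_mono mult_left_mono divide_right_mono) auto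
      thus ?thesis unfolding E_def using n by (simp add: divide_right_mono)
    qed
    finally show ?thesis by simp
  qed
  have "\<phi> t \<le> E * exp (c / (n - 2) * t powr (1 + alpha + 1) / (1 + alpha + 1))"
    using gronwall_powr[OF R _ _ phic ineq t] alpha c n by auto
  thus ?thesis unfolding \<phi>_def E_def n_def .
qed

lemma compare_deriv:
  fixes N :: nat and g1 g2 :: "real \<Rightarrow> real \<Rightarrow> real" and v1 v2 :: "real \<Rightarrow> real"
  assumes N: "N \<ge> 3" and R: "R > 0" and alpha: "alpha > -2" and nu: "nu > -2"
    and c: "c \<ge> 0" and e1: "e1 \<ge> 0" and e2: "e2 \<ge> 0" and Phi: "Phi \<ge> 0"
    and d1: "(v1 has_real_derivative - (R powr (1 - real N) * integral {0..R} (\<lambda>s. s powr (real N - 1) * g1 s (v1 s)))) (at R)"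
    and d2: "(v2 has_real_derivative - (R powr (1 - real N) * integral {0..R} (\<lambda>s. s powr (real N - 1) * g2 s (v2 s)))) (at R)"
    and i1: "(\<lambda>s. s powr (real N - 1) * g1 s (v1 s)) integrable_on {0..R}"
    and i2: "(\<lambda>s. s powr (real N - 1) * g2 s (v2 s)) integrable_on {0..R}"
    and bd: "\<And>s. 0 < s \<Longrightarrow> s \<le> R \<Longrightarrow> \<bar>g1 s (v1 s) - g2 s (v2 s)\<bar>
               \<le> c * s powr alpha * Phi + e1 * s powr alpha + e2 * s powr nu"
  shows "\<bar>deriv v1 R - deriv v2 R\<bar> \<le> ((c * Phi + e1) * (R powr (1 + alpha + 1) / (1 + alpha + 1))
            + e2 * (R powr (1 + nu + 1) / (1 + nu + 1))) / R"
proof -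
  define n where "n = real N"
  have n: "n \<ge> 3" using N by (simp add: n_def)
  define I1 where "I1 = integral {0..R} (\<lambda>s. s powr (n - 1) * g1 s (v1 s))"
  define I2 where "I2 = integral {0..R} (\<lambda>s. s powr (n - 1) * g2 s (v2 s))"
  have "deriv v1 R - deriv v2 R = R powr (1 - n) * (I2 - I1)"
    using DERIV_imp_deriv[OF d1] DERIV_imp_deriv[OF d2] unfolding I1_def I2_def n_def
    by (simp add: algebra_simps)
  hence eq: "\<bar>deriv v1 R - deriv v2 R\<bar> = R powr (1 - n) * \<bar>I1 - I2\<bar>"
    using R by (simp add: abs_mult abs_minus_commute)
  define bnd where "bnd = (\<lambda>s. R powr (n - 2) * ((c * Phi + e1) * s powr (1 + alpha) + e2 * s powr (1 + nu)))"
  have hb: "(bnd has_integral R powr (n - 2) * ((c * Phi + e1) * (R powr (1 + alpha + 1) / (1 + alpha + 1))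
            + e2 * (R powr (1 + nu + 1) / (1 + nu + 1)))) {0..R}"
    unfolding bnd_def using alpha nu R
    by (intro has_integral_mult_right has_integral_add has_integral_powr_from_0) auto
  have fi: "(\<lambda>s. s powr (n - 1) * g1 s (v1 s) - s powr (n - 1) * g2 s (v2 s)) integrable_on {0..R}"
    using integrable_diff[OF i1 i2] unfolding n_def .
  have "\<bar>I1 - I2\<bar> = norm (integral {0..R} (\<lambda>s. s powr (n - 1) * g1 s (v1 s) - s powr (n - 1) * g2 s (v2 s)))"
    unfolding I1_def I2_def using i1 i2 by (simp add: integral_diff n_def)
  also have "\<dots> \<le> integral {0..R} bnd"
  proof (rule integral_norm_bound_integral[OF fi])
    show "bnd integrable_on {0..R}" using hb by (auto simp: integrable_on_def)
    fix s assume s: "s \<in> {0..R}"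
    show "norm (s powr (n - 1) * g1 s (v1 s) - s powr (n - 1) * g2 s (v2 s)) \<le> bnd s"
    proof (cases "s = 0")
      case True thus ?thesis using n alpha nu R c Phi e1 e2 by (simp add: bnd_def)
    next
      case False
      hence sp: "s > 0" using s by auto
      have "norm (s powr (n - 1) * g1 s (v1 s) - s powr (n - 1) * g2 s (v2 s))
          = s powr (n - 1) * \<bar>g1 s (v1 s) - g2 s (v2 s)\<bar>"
        by (simp add: right_diff_distrib[symmetric] abs_mult)
      also have "\<dots> \<le> (R powr (n - 2) * s) * (c * s powr alpha * Phi + e1 * s powr alpha + e2 * s powr nu)"
      proof (rule mult_mono)
        have "s powr (n - 1) = s powr (n - 2) * s" using sp by (simp add: powr_eq_mult[of "n - 1" "n - 2" 1])
        moreover have "s powr (n - 2) \<le> R powr (n - 2)" using s n by (intro powr_mono2) auto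
        ultimately show "s powr (n - 1) \<le> R powr (n - 2) * s" using sp by simp
      qed (use bd[of s] sp s R in auto)
      also have "\<dots> = bnd s"
        using sp by (simp add: bnd_def powr_add algebra_simps)
      finally show ?thesis .
    qed
  qed
  also have "\<dots> = R powr (n - 2) * ((c * Phi + e1) * (R powr (1 + alpha + 1) / (1 + alpha + 1))
            + e2 * (R powr (1 + nu + 1) / (1 + nu + 1)))"
    using hb by (rule integral_unique)
  finally have "\<bar>I1 - I2\<bar> \<le> \<dots>" .
  hence "R powr (1 - n) * \<bar>I1 - I2\<bar> \<le> R powr (1 - n) * (R powr (n - 2) * ((c * Phi + e1) * (R powr (1 + alpha + 1) / (1 + alpha + 1))
            + e2 * (R powr (1 + nu + 1) / (1 + nu + 1))))"
    by (intro mult_left_mono) auto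
  also have "\<dots> = ((c * Phi + e1) * (R powr (1 + alpha + 1) / (1 + alpha + 1))
            + e2 * (R powr (1 + nu + 1) / (1 + nu + 1))) / R"
  proof -
    have gen: "R powr (1 - n) * (R powr (n - 2) * X) = X / R" for X
    proof -
      have "R powr (1 - n) * (R powr (n - 2) * X) = (R powr (1 - n) * R powr (n - 2)) * X"
        by (simp only: mult.assoc)
      also have "R powr (1 - n) * R powr (n - 2) = R powr (-1)" by (simp add: powr_add[symmetric])
      also have "R powr (-1) = 1 / R" using R by (simp add: powr_minus_divide)
      finally show ?thesis by simp
    qed
    show ?thesis by (rule gen)
  qed
  finally show ?thesis using eq by simp
qed

lemma model_unique:
  fixes N :: nat and k0 alpha p z :: real and v1 v2 :: "real \<Rightarrow> real"
  assumes N: "N \<ge> 3" and alpha: "alpha > -2" and k0: "k0 > 0" and p: "p \<ge> 1" and z: "z > 0"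
    and s1: "regular_sol N (\<lambda>s x. k0 * s powr alpha * max x 0 powr p) z v1"
    and s2: "regular_sol N (\<lambda>s x. k0 * s powr alpha * max x 0 powr p) z v2"
    and r: "r \<ge> 0"
  shows "v1 r = v2 r"
proof -
  have le1: "v1 x \<le> z" if "x \<ge> 0" for x
    using regsol_le[OF N s1 _ that] k0 by simp
  have le2: "v2 x \<le> z" if "x \<ge> 0" for x
    using regsol_le[OF N s2 _ that] k0 by simp
  have "\<bar>v1 r - v2 r\<bar> \<le> (0 * ((r + 1) powr (1 + alpha + 1) / (1 + alpha + 1)) + 0 * ((r + 1) powr (1 + alpha + 1) / (1 + alpha + 1))) / (real N - 2)
            * exp ((k0 * (p * z powr (p - 1))) / (real N - 2) * r powr (1 + alpha + 1) / (1 + alpha + 1))"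
  proof (rule compare_sol[OF N s1 s2 _ alpha alpha])
    fix s :: real assume s: "0 < s" "s \<le> r + 1"
    have "\<bar>k0 * s powr alpha * max (v1 s) 0 powr p - k0 * s powr alpha * max (v2 s) 0 powr p\<bar>
        = k0 * s powr alpha * \<bar>max (v1 s) 0 powr p - max (v2 s) 0 powr p\<bar>"
      using k0 by (simp add: right_diff_distrib[symmetric] abs_mult)
    also have "\<dots> \<le> k0 * s powr alpha * (p * z powr (p - 1) * \<bar>v1 s - v2 s\<bar>)"
      using m_lip[OF p z le1[of s] le2[of s]] s k0 by (intro mult_left_mono) auto
    finally show "\<bar>k0 * s powr alpha * max (v1 s) 0 powr p - k0 * s powr alpha * max (v2 s) 0 powr p\<bar>
        \<le> k0 * (p * z powr (p - 1)) * s powr alpha * \<bar>v1 s - v2 s\<bar> + 0 * s powr alpha + 0 * s powr alpha"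
      by (simp add: algebra_simps)
  qed (use r k0 p z in auto)
  thus ?thesis by simp
qed

lemma image_div_Icc:
  fixes k r :: real
  assumes k: "k > 0" and r: "r \<ge> 0"
  shows "(\<lambda>x. x / k) ` {0..k * r} = {0..r}"
proof
  show "(\<lambda>x. x / k) ` {0..k * r} \<subseteq> {0..r}" using k by (auto simp: field_simps)
  show "{0..r} \<subseteq> (\<lambda>x. x / k) ` {0..k * r}"
  proof
    fix y assume y: "y \<in> {0..r}"
    have "y = (k * y) / k" using k by simp
    moreover have "k * y \<in> {0..k * r}" using y k by (auto intro: mult_left_mono)
    ultimately show "y \<in> (\<lambda>x. x / k) ` {0..k * r}" by blast
  qed
qed

lemma model_scale:
  fixes N :: nat and k0 alpha p z :: real and U :: "real \<Rightarrow> real"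
  assumes N: "N \<ge> 3" and alpha: "alpha > -2" and k0: "k0 > 0" and p: "p > 1" and z: "z > 0"
    and sol: "regular_sol N (\<lambda>s x. k0 * s powr alpha * max x 0 powr p) 1 U"
  shows "regular_sol N (\<lambda>s x. k0 * s powr alpha * max x 0 powr p) z
           (\<lambda>r. z * U (z powr (1 / ((2 + alpha) / (p - 1))) * r))"
proof -
  define n where "n = real N"
  have n: "n \<ge> 3" using N by (simp add: n_def)
  define k where "k = z powr (1 / ((2 + alpha) / (p - 1)))"
  have k: "k > 0" using z by (simp add: k_def)
  have k2a: "k powr (2 + alpha) = z powr (p - 1)"
    unfolding k_def using alpha p by (simp add: powr_powr)
  define V where "V = (\<lambda>r. z * U (k * r))"
  have Uc: "continuous_on {0..} U" and U0: "U 0 = 1" using sol by (auto simp: regular_sol_def)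
  have Vc: "continuous_on {0..} V"
    unfolding V_def using k
    by (intro continuous_intros continuous_on_compose2[OF Uc]) (auto intro: mult_nonneg_nonneg)
  have V0: "V 0 = z" using U0 by (simp add: V_def)
  define H where "H = (\<lambda>r s. (s powr (2 - n) - r powr (2 - n)) / (n - 2) * s powr (n - 1)
                     * (k0 * s powr alpha * max (V s) 0 powr p))"
  have main: "(H r has_integral (z - V r)) {0..r}" if r: "r > 0" for r
  proof -
    define F where "F = (\<lambda>s. ((s powr (2 - n) - (k * r) powr (2 - n)) / (n - 2) * s powr (n - 1)
                     * (k0 * s powr alpha * max (U s) 0 powr p)))"
    have hI: "(F has_integral (1 - U (k * r))) {0..k * r}"
      using sol r k unfolding regular_sol_def F_def n_def by auto
    have "((\<lambda>x. F (k * x)) has_integral (1 / \<bar>k\<bar>) *\<^sub>R (1 - U (k * r))) ((\<lambda>x. x / k) ` {0..k * r})"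
      by (rule has_integral_stretch_real[OF hI]) (use k in simp)
    hence h2: "((\<lambda>x. F (k * x)) has_integral (1 - U (k * r)) / k) {0..r}"
      using image_div_Icc[OF k, of r] r k by simp
    define c where "c = k powr (1 + alpha) / z powr p"
    have c: "c > 0" using k z by (simp add: c_def)
    have Feq: "F (k * x) = c * H r x" if x: "x \<in> {0..r}" for x
    proof -
      have x0: "x \<ge> 0" using x by simp
      have a1: "(k * x) powr (2 - n) = k powr (2 - n) * x powr (2 - n)"
        using k x0 by (simp add: powr_mult)
      have a2: "(k * r) powr (2 - n) = k powr (2 - n) * r powr (2 - n)"
        using k r by (simp add: powr_mult)
      have a3: "(k * x) powr (n - 1) = k powr (n - 1) * x powr (n - 1)"
        using k x0 by (simp add: powr_mult)
      have a4: "(k * x) powr alpha = k powr alpha * x powr alpha"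
        using k x0 by (simp add: powr_mult)
      have a5: "max (U (k * x)) 0 powr p = max (V x) 0 powr p / z powr p"
      proof -
        have "max (V x) 0 = z * max (U (k * x)) 0"
          using z by (cases "U (k * x) \<le> 0") (auto simp: V_def max_def mult_le_0_iff)
        hence "max (U (k * x)) 0 = max (V x) 0 / z" using z by simp
        thus ?thesis using z by (simp add: powr_divide)
      qed
      have a6: "k powr (2 - n) * k powr (n - 1) * k powr alpha = k powr (1 + alpha)"
      proof -
        have "k powr (2 - n) * k powr (n - 1) * k powr alpha = k powr ((2 - n) + (n - 1) + alpha)"
          by (simp only: powr_add)
        also have "(2 - n) + (n - 1) + alpha = 1 + alpha" by simp
        finally show ?thesis .
      qed
      have alg: "(K2 * X2 - K2 * R2) / (n - 2) * (K1 * X1) * (k0 * (Ka * Xa) * (M / Z))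
          = (K2 * K1 * Ka) / Z * ((X2 - R2) / (n - 2) * X1 * (k0 * Xa * M))" if "Z \<noteq> 0"
        for K2 X2 R2 K1 X1 Ka Xa M Z
        using that by (simp add: field_simps)
      show ?thesis
        unfolding F_def H_def c_def a1 a2 a3 a4 a5 a6[symmetric]
        by (rule alg) (use z in simp)
    qed
    have "((\<lambda>x. c * H r x) has_integral (1 - U (k * r)) / k) {0..r}"
      using h2 Feq by (rule has_integral_eq[rotated]) simp
    hence "((\<lambda>x. (1 / c) * (c * H r x)) has_integral (1 / c) * ((1 - U (k * r)) / k)) {0..r}"
      by (rule has_integral_mult_right)
    hence "(H r has_integral (1 / c) * ((1 - U (k * r)) / k)) {0..r}"
      using c by simp
    moreover have "(1 / c) * ((1 - U (k * r)) / k) = z - V r"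
    proof -
      have "k * k powr (1 + alpha) = z powr (p - 1)"
        using k k2a by (simp add: powr_add[symmetric] powr_eq_mult[of "2 + alpha" 1 "1 + alpha" k])
      hence "(1 / c) * ((1 - U (k * r)) / k) = z powr p / z powr (p - 1) * (1 - U (k * r))"
        using k z by (simp add: c_def field_simps)
      also have "z powr p / z powr (p - 1) = z"
        using z by (simp add: powr_diff)
      finally show ?thesis by (simp add: V_def algebra_simps)
    qed
    ultimately show ?thesis by simp
  qed
  show ?thesis
    unfolding regular_sol_def using Vc V0 main
    unfolding V_def k_def H_def n_def by auto
qed

lemma K_eps:
  fixes K :: "real \<Rightarrow> real"
  assumes K_asym: "((\<lambda>r. K r / r powr alpha) \<longlongrightarrow> k0) (at_right 0)" and e: "e > 0"
  shows "\<exists>d>0. \<forall>s. 0 < s \<longrightarrow> s < d \<longrightarrow> \<bar>K s - k0 * s powr alpha\<bar> \<le> e * s powr alpha"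
proof -
  have "\<forall>\<^sub>F r in at_right 0. dist (K r / r powr alpha) k0 < e"
    using K_asym e by (simp add: tendsto_iff)
  then obtain d where d: "d > 0" "\<And>s. s > 0 \<Longrightarrow> s < d \<Longrightarrow> dist (K s / s powr alpha) k0 < e"
    unfolding eventually_at_right_field by auto
  have "\<bar>K s - k0 * s powr alpha\<bar> \<le> e * s powr alpha" if s: "0 < s" "s < d" for s
  proof -
    have sp: "s powr alpha > 0" using s by simp
    have "\<bar>K s - k0 * s powr alpha\<bar> = s powr alpha * \<bar>K s / s powr alpha - k0\<bar>"
      using sp by (simp add: abs_mult[symmetric] field_simps)
    also have "\<dots> \<le> s powr alpha * e"
      using d(2)[OF s] sp by (intro mult_left_mono) (auto simp: dist_real_def)
    finally show ?thesis by (simp add: mult.commute)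
  qed
  thus ?thesis using d(1) by blast
qed

lemma f_bound:
  fixes f :: "real \<Rightarrow> real"
  assumes "f \<in> O[at_right 0](\<lambda>r. r powr nu)"
  shows "\<exists>C>0. \<exists>d>0. \<forall>s. 0 < s \<longrightarrow> s < d \<longrightarrow> \<bar>f s\<bar> \<le> C * s powr nu"
proof -
  obtain C where C: "C > 0" "\<forall>\<^sub>F x in at_right 0. norm (f x) \<le> C * norm (x powr nu)"
    using assms by (elim landau_o.bigE)
  then obtain d where d: "d > 0" "\<And>s. s > 0 \<Longrightarrow> s < d \<Longrightarrow> norm (f s) \<le> C * norm (s powr nu)"
    unfolding eventually_at_right_field by auto
  show ?thesis using C(1) d by (intro exI[of _ C] conjI exI[of _ d]) auto
qed

lemma key_z:
  fixes N :: nat and mu alpha k0 nu p z R e Cf :: real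
    and K f :: "real \<Rightarrow> real"
    and u ubar :: "real \<Rightarrow> real \<Rightarrow> real"
  assumes N: "N \<ge> 3"
    and mu: "mu \<ge> 0"
    and K_cont: "continuous_on {0<..} K"
    and K_pos: "\<And>r. r > 0 \<Longrightarrow> K r > 0"
    and alpha: "alpha > -2" and k0: "k0 > 0"
    and f_cont: "continuous_on {0<..} f"
    and f_nonneg: "\<And>r. r > 0 \<Longrightarrow> f r \<ge> 0"
    and nu: "nu > -2" and p1: "p > 1"
    and su: "regular_sol N (\<lambda>s v. K s * (max v 0) powr p + mu * f s) z (\<lambda>r. u r z)"
    and sb: "regular_sol N (\<lambda>s v. k0 * s powr alpha * (max v 0) powr p) z (\<lambda>r. ubar r z)"
    and z: "z > 0" and R: "R > 0" and R1: "2 * R \<le> 1" and e: "e \<ge> 0" and Cf: "Cf \<ge> 0"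
    and Kb1: "\<And>s. 0 < s \<Longrightarrow> s \<le> 2 * R \<Longrightarrow> K s \<le> (k0 + 1) * s powr alpha"
    and Ke: "\<And>s. 0 < s \<Longrightarrow> s \<le> 2 * R \<Longrightarrow> \<bar>K s - k0 * s powr alpha\<bar> \<le> e * s powr alpha"
    and fb: "\<And>s. 0 < s \<Longrightarrow> s \<le> 2 * R \<Longrightarrow> \<bar>f s\<bar> \<le> Cf * s powr nu"
  defines "c \<equiv> (k0 + 1) * (p * z powr (p - 1))"
    and "Ep \<equiv> ((e * z powr p) * (R powr (1 + alpha + 1) / (1 + alpha + 1)) + (mu * Cf) * (R powr (1 + nu + 1) / (1 + nu + 1))) / (real N - 2)"
  shows "(\<forall>t. 0 \<le> t \<and> t \<le> R \<longrightarrow> \<bar>u t z - ubar t z\<bar> \<le> Ep * exp (c / (real N - 2) * R powr (1 + alpha + 1) / (1 + alpha + 1)))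
       \<and> \<bar>deriv (\<lambda>r. u r z) R - deriv (\<lambda>r. ubar r z) R\<bar>
           \<le> ((c * (Ep * exp (c / (real N - 2) * R powr (1 + alpha + 1) / (1 + alpha + 1))) + e * z powr p)
                * (R powr (1 + alpha + 1) / (1 + alpha + 1)) + (mu * Cf) * (R powr (1 + nu + 1) / (1 + nu + 1))) / R"
proof -
  define gu where "gu = (\<lambda>s v. K s * (max v 0) powr p + mu * f s)"
  define gb where "gb = (\<lambda>s v. k0 * s powr alpha * (max v 0) powr p)"
  define n where "n = real N"
  have n: "n \<ge> 3" using N by (simp add: n_def)
  have ule: "u x z \<le> z" if "x \<ge> 0" for x
  proof (rule regsol_le[OF N su _ that])
    fix s :: real assume "0 < s"
    thus "0 \<le> K s * max (u s z) 0 powr p + mu * f s"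
      using K_pos[of s] f_nonneg[of s] mu by (intro add_nonneg_nonneg mult_nonneg_nonneg) auto
  qed
  have ble: "ubar x z \<le> z" if "x \<ge> 0" for x
    using regsol_le[OF N sb _ that] k0 by simp
  have mle: "max v 0 powr p \<le> z powr p" if "v \<le> z" for v
    using that z p1 by (intro powr_mono2) auto
  have uc: "continuous_on {0..} (\<lambda>r. u r z)" using su by (simp add: regular_sol_def)
  have bc: "continuous_on {0..} (\<lambda>r. ubar r z)" using sb by (simp add: regular_sol_def)
  define b where "b = min alpha nu"
  have b: "b > -2" using alpha nu by (simp add: b_def)
  have hcu: "continuous_on {0<..} (\<lambda>s. K s * (max (u s z) 0) powr p + mu * f s)"
    using p1 by (intro continuous_intros K_cont f_cont m_cont continuous_on_subset[OF uc]) auto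
  have hcb: "continuous_on {0<..} (\<lambda>s. k0 * s powr alpha * (max (ubar s z) 0) powr p)"
    using p1 by (intro continuous_intros m_cont continuous_on_subset[OF bc]) auto
  have hbu: "\<bar>K s * (max (u s z) 0) powr p + mu * f s\<bar> \<le> ((k0 + 1) * z powr p + mu * Cf) * s powr b"
    if s: "0 < s" "s \<le> 2 * R" for s
  proof -
    have s1: "s \<le> 1" using s R1 by simp
    have Kp: "K s > 0" using K_pos s by simp
    have fp: "f s \<ge> 0" using f_nonneg s by simp
    have "\<bar>K s * (max (u s z) 0) powr p + mu * f s\<bar> = K s * (max (u s z) 0) powr p + mu * f s"
      using Kp fp mu by simp
    also have "\<dots> \<le> ((k0 + 1) * s powr alpha) * z powr p + mu * (Cf * s powr nu)"
      using Kb1[OF s] Kp mle[OF ule[of s]] s fb[OF s] fp mu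
      by (intro add_mono mult_mono mult_left_mono) auto
    also have "\<dots> \<le> ((k0 + 1) * s powr b) * z powr p + mu * (Cf * s powr b)"
    proof -
      have "s powr alpha \<le> s powr b" "s powr nu \<le> s powr b"
        using s s1 by (auto simp: b_def intro!: powr_mono')
      thus ?thesis using k0 mu Cf z by (intro add_mono mult_right_mono mult_left_mono) auto
    qed
    also have "\<dots> = ((k0 + 1) * z powr p + mu * Cf) * s powr b" by (simp add: algebra_simps)
    finally show ?thesis .
  qed
  have hbb: "\<bar>k0 * s powr alpha * (max (ubar s z) 0) powr p\<bar> \<le> (k0 * z powr p) * s powr alpha"
    if s: "0 < s" "s \<le> 2 * R" for s
  proof -
    have "\<bar>k0 * s powr alpha * (max (ubar s z) 0) powr p\<bar> = k0 * s powr alpha * (max (ubar s z) 0) powr p"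
      using k0 by simp
    also have "\<dots> \<le> k0 * s powr alpha * z powr p"
      using mle[OF ble[of s]] s k0 by (intro mult_left_mono) auto
    finally show ?thesis by (simp add: algebra_simps)
  qed
  have hbu': "\<bar>K s * (max (u s z) 0) powr p + mu * f s\<bar> \<le> ((k0 + 1) * z powr p + mu * Cf) * s powr b"
    if s: "0 < s" "s \<le> 2 * R" for s using hbu[OF s] .
  note pu = regsol_props[OF N su, where R="2 * R" and C="(k0 + 1) * z powr p + mu * Cf" and b=b]
  note pb = regsol_props[OF N sb, where R="2 * R" and C="k0 * z powr p" and b=alpha]
  have R2: "0 < 2 * R" using R by simp
  have du: "((\<lambda>r. u r z) has_real_derivative - (R powr (1 - real N) * integral {0..R}
      (\<lambda>s. s powr (real N - 1) * gu s (u s z)))) (at R)"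
    using pu(4)[OF R2 hcu hbu b, of R] R unfolding gu_def by simp
  have db: "((\<lambda>r. ubar r z) has_real_derivative - (R powr (1 - real N) * integral {0..R}
      (\<lambda>s. s powr (real N - 1) * gb s (ubar s z)))) (at R)"
    using pb(4)[OF R2 hcb hbb alpha, of R] R unfolding gb_def by simp
  have iu: "(\<lambda>s. s powr (real N - 1) * gu s (u s z)) integrable_on {0..R}"
    using pu(2)[OF R2 hcu hbu b, of R] R unfolding gu_def by simp
  have ib: "(\<lambda>s. s powr (real N - 1) * gb s (ubar s z)) integrable_on {0..R}"
    using pb(2)[OF R2 hcb hbb alpha, of R] R unfolding gb_def by simp
  have cnn: "c \<ge> 0" unfolding c_def using k0 p1 z by simp
  have bd: "\<bar>gu s (u s z) - gb s (ubar s z)\<bar>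
      \<le> c * s powr alpha * \<bar>u s z - ubar s z\<bar> + (e * z powr p) * s powr alpha + (mu * Cf) * s powr nu"
    if s: "0 < s" "s \<le> R" for s
  proof -
    have s2: "s \<le> 2 * R" using s R by simp
    define mu' where "mu' = max (u s z) 0 powr p"
    define mb where "mb = max (ubar s z) 0 powr p"
    have Kp: "K s > 0" using K_pos s by simp
    have "gu s (u s z) - gb s (ubar s z) = K s * (mu' - mb) + (K s - k0 * s powr alpha) * mb + mu * f s"
      unfolding gu_def gb_def mu'_def mb_def by (simp add: algebra_simps)
    hence "\<bar>gu s (u s z) - gb s (ubar s z)\<bar> \<le> \<bar>K s * (mu' - mb)\<bar> + \<bar>(K s - k0 * s powr alpha) * mb\<bar> + \<bar>mu * f s\<bar>"
      by linarith
    also have "\<dots> \<le> c * s powr alpha * \<bar>u s z - ubar s z\<bar> + (e * z powr p) * s powr alpha + (mu * Cf) * s powr nu"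
    proof (intro add_mono)
      have "\<bar>K s * (mu' - mb)\<bar> = K s * \<bar>mu' - mb\<bar>" using Kp by (simp add: abs_mult)
      also have "\<dots> \<le> ((k0 + 1) * s powr alpha) * (p * z powr (p - 1) * \<bar>u s z - ubar s z\<bar>)"
        unfolding mu'_def mb_def
        using Kb1[OF s(1) s2] Kp m_lip[of p z "u s z" "ubar s z"] p1 z ule[of s] ble[of s] s
        by (intro mult_mono) auto
      finally show "\<bar>K s * (mu' - mb)\<bar> \<le> c * s powr alpha * \<bar>u s z - ubar s z\<bar>"
        by (simp add: c_def algebra_simps)
      have "\<bar>(K s - k0 * s powr alpha) * mb\<bar> = \<bar>K s - k0 * s powr alpha\<bar> * mb"
        by (simp add: abs_mult mb_def)
      also have "\<dots> \<le> (e * s powr alpha) * z powr p"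
        using Ke[OF s(1) s2] mle[OF ble[of s]] s e unfolding mb_def by (intro mult_mono) auto
      finally show "\<bar>(K s - k0 * s powr alpha) * mb\<bar> \<le> (e * z powr p) * s powr alpha"
        by (simp add: algebra_simps)
      show "\<bar>mu * f s\<bar> \<le> (mu * Cf) * s powr nu"
        using fb[OF s(1) s2] mu by (simp add: abs_mult mult.assoc mult_left_mono)
    qed
    finally show ?thesis .
  qed
  have ep: "e * z powr p \<ge> 0" "mu * Cf \<ge> 0" using e z mu Cf by auto
  define X where "X = c / (real N - 2) * R powr (1 + alpha + 1) / (1 + alpha + 1)"
  have dA: "\<bar>u t z - ubar t z\<bar> \<le> Ep * exp X" if t: "0 \<le> t" "t \<le> R" for t
  proof -
    have "\<bar>u t z - ubar t z\<bar> \<le> Ep * exp (c / (real N - 2) * t powr (1 + alpha + 1) / (1 + alpha + 1))"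
      using compare_sol[OF N su sb R alpha nu cnn ep bd[unfolded gu_def gb_def] t] unfolding Ep_def by simp
    also have "\<dots> \<le> Ep * exp X"
    proof (rule mult_left_mono)
      have "t powr (1 + alpha + 1) \<le> R powr (1 + alpha + 1)" using t alpha by (intro powr_mono2) auto
      hence "c / (real N - 2) * t powr (1 + alpha + 1) \<le> c / (real N - 2) * R powr (1 + alpha + 1)"
        using cnn N by (intro mult_left_mono) auto
      hence "c / (real N - 2) * t powr (1 + alpha + 1) / (1 + alpha + 1) \<le> c / (real N - 2) * R powr (1 + alpha + 1) / (1 + alpha + 1)"
        using alpha by (intro divide_right_mono) auto
      thus "exp (c / (real N - 2) * t powr (1 + alpha + 1) / (1 + alpha + 1)) \<le> exp X"
        unfolding X_def by (simp only: exp_le_cancel_iff)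
      have a: "0 \<le> R powr (1 + alpha + 1) / (1 + alpha + 1)" using alpha by simp
      have b: "0 \<le> R powr (1 + nu + 1) / (1 + nu + 1)" using nu by simp
      show "0 \<le> Ep" unfolding Ep_def
        using mult_nonneg_nonneg[OF ep(1) a] mult_nonneg_nonneg[OF ep(2) b] N by simp
    qed
    finally show ?thesis .
  qed
  have Phi: "Ep * exp X \<ge> 0" using dA[of 0] R by (meson abs_ge_zero order_trans less_imp_le order_refl)
  have dB: "\<bar>deriv (\<lambda>r. u r z) R - deriv (\<lambda>r. ubar r z) R\<bar>
           \<le> ((c * (Ep * exp X) + e * z powr p) * (R powr (1 + alpha + 1) / (1 + alpha + 1))
              + (mu * Cf) * (R powr (1 + nu + 1) / (1 + nu + 1))) / R"
  proof (rule compare_deriv[where ?v1.0="\<lambda>r. u r z" and ?v2.0="\<lambda>r. ubar r z" and ?g1.0=gu and ?g2.0=gb,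
        OF N R alpha nu cnn ep Phi du db iu ib])
    fix s assume s: "0 < s" "s \<le> R"
    have "\<bar>gu s (u s z) - gb s (ubar s z)\<bar>
      \<le> c * s powr alpha * \<bar>u s z - ubar s z\<bar> + (e * z powr p) * s powr alpha + (mu * Cf) * s powr nu"
      by (rule bd[OF s])
    also have "\<dots> \<le> c * s powr alpha * (Ep * exp X) + (e * z powr p) * s powr alpha + (mu * Cf) * s powr nu"
    proof -
      have "c * s powr alpha * \<bar>u s z - ubar s z\<bar> \<le> c * s powr alpha * (Ep * exp X)"
        using dA[of s] s cnn by (intro mult_left_mono) auto
      thus ?thesis by linarith
    qed
    finally show "\<bar>gu s (u s z) - gb s (ubar s z)\<bar>
      \<le> c * s powr alpha * (Ep * exp X) + e * z powr p * s powr alpha + mu * Cf * s powr nu" .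
  qed
  show ?thesis using dA dB unfolding X_def by auto
qed

lemma scale_alg:
  fixes z sigma alpha p nu :: real
  assumes z: "z > 0" and sigma: "sigma > 0" and alpha: "alpha > -2" and p: "p > 1"
  defines "th \<equiv> (2 + alpha) / (p - 1)"
  defines "R \<equiv> sigma * z powr (-1 / th)"
  shows "z powr (p - 1) * R powr (1 + alpha + 1) = sigma powr (1 + alpha + 1)"
    and "R powr (1 + nu + 1) = z * sigma powr (1 + nu + 1) * z powr (- (1 + (2 + nu) / th))"
    and "z powr (-1 - 1 / th) / R = 1 / (sigma * z)"
    and "z powr p = z * z powr (p - 1)"
    and "z powr (1 / th) * R = sigma"
    and "R > 0"
proof -
  have th: "th > 0" unfolding th_def using alpha p by simp
  have zz: "z powr (-1 / th) > 0" using z by simp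
  show "R > 0" unfolding R_def using sigma zz by simp
  have "R powr (1 + alpha + 1) = sigma powr (1 + alpha + 1) * z powr (-1 / th * (1 + alpha + 1))"
    unfolding R_def using sigma z by (simp add: powr_mult powr_powr)
  also have "-1 / th * (1 + alpha + 1) = - (p - 1)" unfolding th_def using alpha p by (simp add: field_simps)
  finally have "z powr (p - 1) * R powr (1 + alpha + 1) = sigma powr (1 + alpha + 1) * (z powr (p - 1) * z powr (- (p - 1)))"
    by (simp add: algebra_simps)
  also have "z powr (p - 1) * z powr (- (p - 1)) = 1" using z by (simp add: powr_add[symmetric])
  finally show "z powr (p - 1) * R powr (1 + alpha + 1) = sigma powr (1 + alpha + 1)" by simp
  have "R powr (1 + nu + 1) = sigma powr (1 + nu + 1) * z powr (-1 / th * (1 + nu + 1))"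
    unfolding R_def using sigma z by (simp add: powr_mult powr_powr)
  also have "z powr (-1 / th * (1 + nu + 1)) = z powr 1 * z powr (- (1 + (2 + nu) / th))"
    by (rule powr_eq_mult) (simp add: field_simps)
  finally show "R powr (1 + nu + 1) = z * sigma powr (1 + nu + 1) * z powr (- (1 + (2 + nu) / th))"
    using z by simp
  have "z powr (-1 - 1 / th) = z powr (-1) * z powr (-1 / th)"
    by (rule powr_eq_mult) simp
  thus "z powr (-1 - 1 / th) / R = 1 / (sigma * z)"
    unfolding R_def using zz sigma z by (simp add: powr_minus_divide)
  show "z powr p = z * z powr (p - 1)"
    using powr_eq_mult[of p 1 "p - 1" z] z by simp
  have "z powr (1 / th) * z powr (-1 / th) = 1" using z by (simp add: powr_add[symmetric])
  thus "z powr (1 / th) * R = sigma" unfolding R_def by (simp add: algebra_simps)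
qed

lemma main_est:
  fixes N :: nat and mu alpha k0 nu p sigma :: real
    and K f :: "real \<Rightarrow> real"
    and u ubar :: "real \<Rightarrow> real \<Rightarrow> real"
  assumes N: "N \<ge> 3"
    and mu: "mu \<ge> 0"
    and K_cont: "continuous_on {0<..} K"
    and K_pos: "\<And>r. r > 0 \<Longrightarrow> K r > 0"
    and alpha: "alpha > -2" and k0: "k0 > 0"
    and K_asym: "((\<lambda>r. K r / r powr alpha) \<longlongrightarrow> k0) (at_right 0)"
    and f_cont: "continuous_on {0<..} f"
    and f_nonneg: "\<And>r. r > 0 \<Longrightarrow> f r \<ge> 0"
    and nu: "nu > -2"
    and f_bigO: "f \<in> O[at_right 0](\<lambda>r. r powr nu)"
    and p1: "p > 1"
    and u_sol: "\<And>zeta. zeta > 0 \<Longrightarrow>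
       regular_sol N (\<lambda>s v. K s * (max v 0) powr p + mu * f s) zeta (\<lambda>r. u r zeta)"
    and ubar_sol: "\<And>zeta. zeta > 0 \<Longrightarrow>
       regular_sol N (\<lambda>s v. k0 * s powr alpha * (max v 0) powr p) zeta (\<lambda>r. ubar r zeta)"
    and sigma: "sigma > 0"
  shows "\<exists>C>0. \<forall>e. 0 < e \<longrightarrow> e \<le> 1 \<longrightarrow> (\<forall>\<^sub>F z in at_top.
     (\<forall>t. 0 \<le> t \<and> t \<le> sigma * z powr (-1 / ((2 + alpha) / (p - 1))) \<longrightarrow>
         \<bar>u t z - ubar t z\<bar> \<le> z * (C * (e + z powr (- (1 + (2 + nu) / ((2 + alpha) / (p - 1)))))))
   \<and> z powr (-1 - 1 / ((2 + alpha) / (p - 1))) *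
       \<bar>deriv (\<lambda>r. u r z) (sigma * z powr (-1 / ((2 + alpha) / (p - 1))))
        - deriv (\<lambda>r. ubar r z) (sigma * z powr (-1 / ((2 + alpha) / (p - 1))))\<bar>
       \<le> C * (e + z powr (- (1 + (2 + nu) / ((2 + alpha) / (p - 1))))))"
proof -
  define th where "th = (2 + alpha) / (p - 1)"
  define ga where "ga = 1 + (2 + nu) / th"
  define n where "n = real N"
  have n: "n \<ge> 3" using N by (simp add: n_def)
  have th: "th > 0" unfolding th_def using alpha p1 by simp
  obtain Cf0 df where Cf0: "Cf0 > 0" and df: "df > 0" and fb0: "\<And>s. 0 < s \<Longrightarrow> s < df \<Longrightarrow> \<bar>f s\<bar> \<le> Cf0 * s powr nu"
    using f_bound[OF f_bigO] by blast
  define Cf where "Cf = Cf0"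
  have Cf: "Cf \<ge> 0" using Cf0 by (simp add: Cf_def)
  obtain d1 where d1: "d1 > 0" and Kd1: "\<And>s. 0 < s \<Longrightarrow> s < d1 \<Longrightarrow> \<bar>K s - k0 * s powr alpha\<bar> \<le> 1 * s powr alpha"
    using K_eps[OF K_asym, of 1] by auto
  define A where "A = sigma powr (1 + alpha + 1) / (1 + alpha + 1)"
  define Bn where "Bn = sigma powr (1 + nu + 1) / (1 + nu + 1)"
  define G0 where "G0 = (k0 + 1) * p * A / (n - 2)"
  define C where "C = (exp G0 / (n - 2) + (G0 * exp G0 + 1) / sigma) * (A + mu * Cf * Bn) + 1"
  have A: "A \<ge> 0" and Bn: "Bn \<ge> 0" using alpha nu by (auto simp: A_def Bn_def)
  have G0: "G0 \<ge> 0" using k0 p1 A n by (simp add: G0_def)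
  have AB: "A + mu * Cf * Bn \<ge> 0" using A Bn mu Cf by simp
  have Cge: "(exp G0 / (n - 2) + (G0 * exp G0 + 1) / sigma) * (A + mu * Cf * Bn) \<le> C" by (simp add: C_def)
  have Cpos: "C > 0"
  proof -
    have "0 \<le> (exp G0 / (n - 2) + (G0 * exp G0 + 1) / sigma) * (A + mu * Cf * Bn)"
      using n G0 sigma AB A Bn mu Cf by (intro mult_nonneg_nonneg add_nonneg_nonneg divide_nonneg_nonneg) auto
    thus ?thesis by (simp add: C_def)
  qed
  have "\<forall>e. 0 < e \<longrightarrow> e \<le> 1 \<longrightarrow> (\<forall>\<^sub>F z in at_top.
     (\<forall>t. 0 \<le> t \<and> t \<le> sigma * z powr (-1 / th) \<longrightarrow>
         \<bar>u t z - ubar t z\<bar> \<le> z * (C * (e + z powr (- ga))))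
   \<and> z powr (-1 - 1 / th) *
       \<bar>deriv (\<lambda>r. u r z) (sigma * z powr (-1 / th)) - deriv (\<lambda>r. ubar r z) (sigma * z powr (-1 / th))\<bar>
       \<le> C * (e + z powr (- ga)))"
  proof (intro allI impI)
    fix e :: real assume e: "0 < e" "e \<le> 1"
    obtain de where de: "de > 0" and Kde: "\<And>s. 0 < s \<Longrightarrow> s < de \<Longrightarrow> \<bar>K s - k0 * s powr alpha\<bar> \<le> e * s powr alpha"
      using K_eps[OF K_asym e(1)] by auto
    define D where "D = min (min de d1) (min df 1)"
    have D: "D > 0" using de d1 df by (simp add: D_def)
    have ev1: "\<forall>\<^sub>F z in at_top. z powr (-1 / th) < D / (2 * sigma)"
      using tendsto_neg_powr[OF _ filterlim_ident, of "-1 / th"] th D sigma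
      by (intro order_tendstoD(2)) auto
    have ev2: "\<forall>\<^sub>F z in at_top. z > (0::real)" by (rule eventually_gt_at_top)
    show "\<forall>\<^sub>F z in at_top.
     (\<forall>t. 0 \<le> t \<and> t \<le> sigma * z powr (-1 / th) \<longrightarrow>
         \<bar>u t z - ubar t z\<bar> \<le> z * (C * (e + z powr (- ga))))
   \<and> z powr (-1 - 1 / th) *
       \<bar>deriv (\<lambda>r. u r z) (sigma * z powr (-1 / th)) - deriv (\<lambda>r. ubar r z) (sigma * z powr (-1 / th))\<bar>
       \<le> C * (e + z powr (- ga))"
      using ev1 ev2
    proof eventually_elim
      case (elim z)
      hence z: "z > 0" and zl: "z powr (-1 / th) < D / (2 * sigma)" by auto
      define R where "R = sigma * z powr (-1 / th)"
      note sa = scale_alg[OF z sigma alpha p1, folded th_def, folded R_def]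
      have R: "R > 0" by (rule sa(6))
      have R2: "2 * R < D" using zl sigma unfolding R_def by (simp add: field_simps)
      have s_small: "s < de" "s < d1" "s < df" if "0 < s" "s \<le> 2 * R" for s
        using that R2 by (auto simp: D_def)
      have R1: "2 * R \<le> 1" using R2 by (simp add: D_def)
      have Kb1: "K s \<le> (k0 + 1) * s powr alpha" if s: "0 < s" "s \<le> 2 * R" for s
        using Kd1[OF s(1) s_small(2)[OF s]] by (simp add: algebra_simps abs_le_iff)
      have Ke: "\<bar>K s - k0 * s powr alpha\<bar> \<le> e * s powr alpha" if s: "0 < s" "s \<le> 2 * R" for s
        using Kde[OF s(1) s_small(1)[OF s]] .
      have fb: "\<bar>f s\<bar> \<le> Cf * s powr nu" if s: "0 < s" "s \<le> 2 * R" for s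
        using fb0[OF s(1) s_small(3)[OF s]] by (simp add: Cf_def)
      note KZ = key_z[where u=u and ubar=ubar and z=z and K=K and f=f and mu=mu and e=e and Cf=Cf and R=R, OF N mu K_cont K_pos alpha k0 f_cont f_nonneg nu p1 u_sol[OF z] ubar_sol[OF z] z R R1
          less_imp_le[OF e(1)] Cf Kb1 Ke fb]
      define zp1 where "zp1 = z powr (p - 1)"
      define Ra where "Ra = R powr (1 + alpha + 1)"
      define Rn where "Rn = R powr (1 + nu + 1)"
      define Sa where "Sa = sigma powr (1 + alpha + 1)"
      define Sn where "Sn = sigma powr (1 + nu + 1)"
      define G where "G = z powr (- ga)"
      have G: "G \<ge> 0" by (simp add: G_def)
      have f1: "Sa = zp1 * Ra" using sa(1) unfolding zp1_def Ra_def Sa_def by simp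
      have f2: "Rn = z * Sn * G" using sa(2)[of nu] unfolding Rn_def Sn_def G_def ga_def by simp
      have f4: "z powr p = z * zp1" using sa(4) unfolding zp1_def by simp
      have a1: "1 + alpha + 1 \<noteq> 0" and a2: "1 + nu + 1 \<noteq> 0" and m: "n - 2 \<noteq> 0"
        using alpha nu n by auto
      define Q where "Q = e * A + mu * Cf * Bn * G"
      have Q: "Q \<ge> 0" unfolding Q_def using e A Bn mu Cf G by simp
      have QC: "Q \<le> (A + mu * Cf * Bn) * (e + G)"
        unfolding Q_def using e A Bn mu Cf G by (simp add: algebra_simps)
      have hX: "(k0 + 1) * (p * z powr (p - 1)) / (real N - 2) * R powr (1 + alpha + 1) / (1 + alpha + 1) = G0"
        unfolding zp1_def[symmetric] Ra_def[symmetric] n_def[symmetric] G0_def A_def Sa_def[symmetric] f1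
        using a1 m by (simp add: field_simps)
      have hEp: "(e * z powr p * (R powr (1 + alpha + 1) / (1 + alpha + 1)) + mu * Cf * (R powr (1 + nu + 1) / (1 + nu + 1))) / (real N - 2)
          = z * Q / (n - 2)"
        unfolding Ra_def[symmetric] Rn_def[symmetric] f4 n_def[symmetric] Q_def A_def Bn_def
          Sa_def[symmetric] Sn_def[symmetric] f2 f1
        using a1 a2 m by (simp add: field_simps)
      have Ceq: "exp G0 / (n - 2) * (A + mu * Cf * Bn) \<le> C" and Ceq2: "(G0 * exp G0 + 1) / sigma * (A + mu * Cf * Bn) \<le> C"
      proof -
        have "0 \<le> exp G0 / (n - 2) * (A + mu * Cf * Bn)" using n AB by simp
        moreover have "0 \<le> (G0 * exp G0 + 1) / sigma * (A + mu * Cf * Bn)" using G0 sigma AB by simp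
        ultimately show "exp G0 / (n - 2) * (A + mu * Cf * Bn) \<le> C" "(G0 * exp G0 + 1) / sigma * (A + mu * Cf * Bn) \<le> C"
          using Cge by (simp_all add: algebra_simps)
      qed
      have part1: "\<bar>u t z - ubar t z\<bar> \<le> z * (C * (e + G))" if t: "0 \<le> t" "t \<le> R" for t
      proof -
        have "\<bar>u t z - ubar t z\<bar> \<le> z * Q / (n - 2) * exp G0"
          using conjunct1[OF KZ] t unfolding hX hEp by blast
        also have "\<dots> = z * (exp G0 / (n - 2) * Q)" by simp
        also have "\<dots> \<le> z * (exp G0 / (n - 2) * ((A + mu * Cf * Bn) * (e + G)))"
          using QC z n by (intro mult_left_mono) auto
        also have "\<dots> \<le> z * (C * (e + G))"
        proof (rule mult_left_mono)
          have "exp G0 / (n - 2) * ((A + mu * Cf * Bn) * (e + G)) = (exp G0 / (n - 2) * (A + mu * Cf * Bn)) * (e + G)"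
            by (simp only: mult.assoc)
          also have "\<dots> \<le> C * (e + G)" using Ceq e G by (intro mult_right_mono) auto
          finally show "exp G0 / (n - 2) * ((A + mu * Cf * Bn) * (e + G)) \<le> C * (e + G)" .
        qed (use z in auto)
        finally show ?thesis .
      qed
      define Y where "Y = ((k0 + 1) * (p * z powr (p - 1)) * (z * Q / (n - 2) * exp G0) + e * z powr p) * (R powr (1 + alpha + 1) / (1 + alpha + 1))
          + mu * Cf * (R powr (1 + nu + 1) / (1 + nu + 1))"
      have dY: "\<bar>deriv (\<lambda>r. u r z) R - deriv (\<lambda>r. ubar r z) R\<bar> \<le> Y / R"
        using conjunct2[OF KZ] unfolding hX hEp Y_def by simp
      have Yeq: "Y = z * Q * (G0 * exp G0 + 1)"
      proof -
        have gen0: "((k0 + 1) * (p * zp1) * (z * Q / m * E) + e * (z * zp1)) * (Ra / a)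
            + mu * Cf * ((z * Sn * G) / b)
            = z * Q * ((k0 + 1) * p * (zp1 * Ra / a) / m * E + 1)"
          if "Q = e * (zp1 * Ra / a) + mu * Cf * (Sn / b) * G" "a \<noteq> 0" "b \<noteq> 0" "m \<noteq> 0" for E a b m
          unfolding that(1) using that(2-4) by (simp add: field_simps)
        have gen: "((k0 + 1) * (p * zp1) * (z * Q / (n - 2) * E) + e * (z * zp1)) * (Ra / (1 + alpha + 1))
            + mu * Cf * ((z * Sn * G) / (1 + nu + 1))
            = z * Q * ((k0 + 1) * p * (zp1 * Ra / (1 + alpha + 1)) / (n - 2) * E + 1)"
          if "Q = e * (zp1 * Ra / (1 + alpha + 1)) + mu * Cf * (Sn / (1 + nu + 1)) * G" for E
          by (rule gen0[OF that a1 a2 m])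
        have Qe: "Q = e * (zp1 * Ra / (1 + alpha + 1)) + mu * Cf * (Sn / (1 + nu + 1)) * G"
          unfolding Q_def A_def Bn_def Sa_def[symmetric] Sn_def[symmetric] f1 by simp
        have G0e: "G0 = (k0 + 1) * p * (zp1 * Ra / (1 + alpha + 1)) / (n - 2)"
          unfolding G0_def A_def Sa_def[symmetric] f1 ..
        have "Y = z * Q * ((k0 + 1) * p * (zp1 * Ra / (1 + alpha + 1)) / (n - 2) * exp G0 + 1)"
          unfolding Y_def Ra_def[symmetric] Rn_def[symmetric] f4 zp1_def[symmetric] f2 by (rule gen[OF Qe])
        thus ?thesis unfolding G0e[symmetric] .
      qed
      have part2: "z powr (-1 - 1 / th) * \<bar>deriv (\<lambda>r. u r z) R - deriv (\<lambda>r. ubar r z) R\<bar> \<le> C * (e + G)"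
      proof -
        have "z powr (-1 - 1 / th) * \<bar>deriv (\<lambda>r. u r z) R - deriv (\<lambda>r. ubar r z) R\<bar> \<le> z powr (-1 - 1 / th) * (Y / R)"
          using dY by (intro mult_left_mono) auto
        also have "\<dots> = Y * (z powr (-1 - 1 / th) / R)" by simp
        also have "\<dots> = Y / (sigma * z)" using sa(3) by simp
        also have "\<dots> = (G0 * exp G0 + 1) / sigma * Q" unfolding Yeq using z sigma by (simp add: field_simps)
        also have "\<dots> \<le> (G0 * exp G0 + 1) / sigma * ((A + mu * Cf * Bn) * (e + G))"
          using QC G0 sigma by (intro mult_left_mono) auto
        also have "\<dots> = ((G0 * exp G0 + 1) / sigma * (A + mu * Cf * Bn)) * (e + G)"
          by (simp only: mult.assoc)
        also have "\<dots> \<le> C * (e + G)" using Ceq2 e G by (intro mult_right_mono) auto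
        finally show ?thesis .
      qed
      show ?case using part1 part2 unfolding R_def G_def by auto
    qed
  qed
  thus ?thesis using Cpos unfolding th_def ga_def by blast
qed

theorem lemma3p5:
  fixes N :: nat and mu alpha k0 nu p :: real
    and K f :: "real \<Rightarrow> real"
    and u ubar :: "real \<Rightarrow> real \<Rightarrow> real"
  assumes N: "N \<ge> 3"
    and mu: "mu \<ge> 0"
    and K_cont: "continuous_on {0<..} K"
    and K_pos: "\<And>r. r > 0 \<Longrightarrow> K r > 0"
    and alpha: "alpha > -2" and k0: "k0 > 0"
    and K_asym: "((\<lambda>r. K r / r powr alpha) \<longlongrightarrow> k0) (at_right 0)"
    and f_cont: "continuous_on {0<..} f"
    and f_nonneg: "\<And>r. r > 0 \<Longrightarrow> f r \<ge> 0"
    and f_nonzero: "\<exists>r>0. f r \<noteq> 0"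
    and nu: "nu > -2"
    and f_bigO: "f \<in> O[at_right 0](\<lambda>r. r powr nu)"
    and p: "p > (real N + 2 + 2 * alpha) / (real N - 2)"
    and u_sol: "\<And>zeta. zeta > 0 \<Longrightarrow>
       regular_sol N (\<lambda>s v. K s * (max v 0) powr p + mu * f s) zeta (\<lambda>r. u r zeta)"
    and ubar_sol: "\<And>zeta. zeta > 0 \<Longrightarrow>
       regular_sol N (\<lambda>s v. k0 * s powr alpha * (max v 0) powr p) zeta (\<lambda>r. ubar r zeta)"
  shows "(\<forall>sigma>0. \<exists>zeta_s>0. \<forall>zeta>zeta_s.
            \<forall>r. 0 < r \<and> r < sigma * zeta powr (-1 / ((2 + alpha) / (p - 1))) \<longrightarrow> u r zeta \<noteq> 0)
       \<and> (\<forall>sigma>0.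
            ((\<lambda>zeta. zeta powr (-1) *
                 \<bar>u (sigma * zeta powr (-1 / ((2 + alpha) / (p - 1)))) zeta
                  - ubar (sigma * zeta powr (-1 / ((2 + alpha) / (p - 1)))) zeta\<bar>)
               \<longlongrightarrow> 0) at_top
          \<and> ((\<lambda>zeta. zeta powr (-1 - 1 / ((2 + alpha) / (p - 1))) *
                 \<bar>deriv (\<lambda>r. u r zeta) (sigma * zeta powr (-1 / ((2 + alpha) / (p - 1))))
                  - deriv (\<lambda>r. ubar r zeta) (sigma * zeta powr (-1 / ((2 + alpha) / (p - 1))))\<bar>)
               \<longlongrightarrow> 0) at_top)"
proof -
  define th where "th = (2 + alpha) / (p - 1)"
  define ga where "ga = 1 + (2 + nu) / th"
  define n where "n = real N"
  have n: "n \<ge> 3" using N by (simp add: n_def)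
  have p1: "p > 1"
  proof -
    have "p * (n - 2) > n + 2 + 2 * alpha" using p n by (simp add: n_def pos_divide_less_eq)
    hence "(n - 2) * 1 < p * (n - 2)" using alpha by simp
    thus ?thesis using n by (simp add: mult.commute)
  qed
  have th: "th > 0" unfolding th_def using alpha p1 by simp
  have ga: "ga > 0"
  proof -
    have "(2 + nu) / th > 0" using th nu by simp
    thus ?thesis unfolding ga_def by simp
  qed
  define U where "U = (\<lambda>r. ubar r 1)"
  have Usol: "regular_sol N (\<lambda>s v. k0 * s powr alpha * (max v 0) powr p) 1 U"
    using ubar_sol[of 1] unfolding U_def by simp
  have Upos: "U r > 0" if "r \<ge> 0" for r
    using model_pos[OF N alpha k0 p _ Usol that] by simp
  have Uc: "continuous_on {0..} U" using Usol by (simp add: regular_sol_def)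
  have scale: "ubar r z = z * U (z powr (1 / th) * r)" if z: "z > 0" and r: "r \<ge> 0" for z r
    using model_unique[OF N alpha k0 _ z ubar_sol[OF z] model_scale[OF N alpha k0 p1 z Usol] r] p1
    unfolding th_def by simp
  have Gt: "\<forall>\<^sub>F z in at_top. z powr (- ga) < c" if "c > 0" for c :: real
    using tendsto_neg_powr[OF _ filterlim_ident, of "- ga"] ga that
    by (intro order_tendstoD(2)) auto
  have ME: "\<exists>C>0. \<forall>e. 0 < e \<longrightarrow> e \<le> 1 \<longrightarrow> (\<forall>\<^sub>F z in at_top.
     (\<forall>t. 0 \<le> t \<and> t \<le> sigma * z powr (-1 / th) \<longrightarrow>
         \<bar>u t z - ubar t z\<bar> \<le> z * (C * (e + z powr (- ga))))
   \<and> z powr (-1 - 1 / th) *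
       \<bar>deriv (\<lambda>r. u r z) (sigma * z powr (-1 / th))
        - deriv (\<lambda>r. ubar r z) (sigma * z powr (-1 / th))\<bar>
       \<le> C * (e + z powr (- ga)))" if sigma: "sigma > 0" for sigma
    using main_est[OF N mu K_cont K_pos alpha k0 K_asym f_cont f_nonneg nu f_bigO p1 u_sol ubar_sol sigma]
    unfolding th_def ga_def by blast
  have partA: "\<exists>zeta_s>0. \<forall>zeta>zeta_s.
            \<forall>r. 0 < r \<and> r < sigma * zeta powr (-1 / th) \<longrightarrow> u r zeta \<noteq> 0"
    if sigma: "sigma > 0" for sigma
  proof -
    obtain C where C: "C > 0" and CE: "\<And>e. 0 < e \<Longrightarrow> e \<le> 1 \<Longrightarrow> (\<forall>\<^sub>F z in at_top.
     (\<forall>t. 0 \<le> t \<and> t \<le> sigma * z powr (-1 / th) \<longrightarrow>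
         \<bar>u t z - ubar t z\<bar> \<le> z * (C * (e + z powr (- ga))))
   \<and> z powr (-1 - 1 / th) *
       \<bar>deriv (\<lambda>r. u r z) (sigma * z powr (-1 / th))
        - deriv (\<lambda>r. ubar r z) (sigma * z powr (-1 / th))\<bar>
       \<le> C * (e + z powr (- ga)))"
      using ME[OF sigma] by blast
    have "\<exists>x\<in>{0..sigma}. \<forall>y\<in>{0..sigma}. U x \<le> U y"
      by (rule continuous_attains_inf[OF compact_Icc]) (use sigma in \<open>auto intro: continuous_on_subset[OF Uc]\<close>)
    then obtain x0 where x0: "x0 \<in> {0..sigma}" and xmin: "\<And>y. y \<in> {0..sigma} \<Longrightarrow> U x0 \<le> U y"
      by blast
    define m where "m = U x0"
    have m: "m > 0" using Upos x0 by (simp add: m_def)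
    define e where "e = min 1 (m / (4 * C))"
    have e: "0 < e" "e \<le> 1" "e \<le> m / (4 * C)" using m C by (auto simp: e_def)
    have "\<forall>\<^sub>F z in at_top. ((\<forall>t. 0 \<le> t \<and> t \<le> sigma * z powr (-1 / th) \<longrightarrow>
         \<bar>u t z - ubar t z\<bar> \<le> z * (C * (e + z powr (- ga)))) \<and> z powr (- ga) < m / (4 * C)) \<and> z > 0"
      using eventually_conj[OF eventually_conj[OF CE[OF e(1,2)] Gt[of "m / (4 * C)"]] eventually_gt_at_top[of 0]]
    proof (rule eventually_mono)
      fix z :: real assume "(((\<forall>t. 0 \<le> t \<and> t \<le> sigma * z powr (-1 / th) \<longrightarrow>
         \<bar>u t z - ubar t z\<bar> \<le> z * (C * (e + z powr (- ga))))
         \<and> z powr (-1 - 1 / th) *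
       \<bar>deriv (\<lambda>r. u r z) (sigma * z powr (-1 / th))
        - deriv (\<lambda>r. ubar r z) (sigma * z powr (-1 / th))\<bar>
       \<le> C * (e + z powr (- ga))) \<and> z powr (- ga) < m / (4 * C)) \<and> z > 0"
      thus "((\<forall>t. 0 \<le> t \<and> t \<le> sigma * z powr (-1 / th) \<longrightarrow>
         \<bar>u t z - ubar t z\<bar> \<le> z * (C * (e + z powr (- ga)))) \<and> z powr (- ga) < m / (4 * C)) \<and> z > 0"
        by blast
    qed (use m C in auto)
    then obtain N0 where N0: "\<And>z. z \<ge> N0 \<Longrightarrow> ((\<forall>t. 0 \<le> t \<and> t \<le> sigma * z powr (-1 / th) \<longrightarrow>
         \<bar>u t z - ubar t z\<bar> \<le> z * (C * (e + z powr (- ga)))) \<and> z powr (- ga) < m / (4 * C)) \<and> z > 0"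
      unfolding eventually_at_top_linorder by blast
    show ?thesis
    proof (intro exI[of _ "max N0 1"] conjI allI impI)
      fix z r :: real assume zN: "max N0 1 < z" and r: "0 < r \<and> r < sigma * z powr (-1 / th)"
      have Nz: "((\<forall>t. 0 \<le> t \<and> t \<le> sigma * z powr (-1 / th) \<longrightarrow>
         \<bar>u t z - ubar t z\<bar> \<le> z * (C * (e + z powr (- ga)))) \<and> z powr (- ga) < m / (4 * C)) \<and> z > 0"
        using N0[of z] zN by auto
      hence z: "z > 0" by blast
      have d: "\<bar>u r z - ubar r z\<bar> \<le> z * (C * (e + z powr (- ga)))" using Nz r by auto
      have "C * (e + z powr (- ga)) \<le> C * (m / (4 * C) + m / (4 * C))"
        using Nz e C by (intro mult_left_mono) auto
      also have "\<dots> = m / 2" using C by (simp add: field_simps)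
      finally have d2: "\<bar>u r z - ubar r z\<bar> \<le> z * (m / 2)"
        using d z by (meson mult_left_mono less_imp_le order_trans)
      have zr: "z powr (1 / th) * r \<in> {0..sigma}"
      proof -
        have "z powr (1 / th) * r \<le> z powr (1 / th) * (sigma * z powr (-1 / th))"
          using r by (intro mult_left_mono) auto
        also have "\<dots> = sigma" using scale_alg(5)[OF z sigma alpha p1] unfolding th_def by simp
        finally show ?thesis using r z by auto
      qed
      have "ubar r z = z * U (z powr (1 / th) * r)" using scale[OF z] r by auto
      also have "\<dots> \<ge> z * m" using xmin[OF zr] z by (simp add: m_def)
      finally have "ubar r z \<ge> z * m" .
      hence "u r z \<ge> z * m - z * (m / 2)" using d2 by linarith
      moreover have "z * m - z * (m / 2) > 0" using z m by simp
      ultimately show "u r z \<noteq> 0" by simp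
    qed (simp)
  qed
  have tz: "(F \<longlongrightarrow> 0) at_top" if "\<And>eta. eta > 0 \<Longrightarrow> \<forall>\<^sub>F z in at_top. \<bar>F z\<bar> < eta" for F :: "real \<Rightarrow> real"
    using that by (simp add: tendsto_iff dist_real_def)
  have partB: "((\<lambda>zeta. zeta powr (-1) *
                 \<bar>u (sigma * zeta powr (-1 / th)) zeta
                  - ubar (sigma * zeta powr (-1 / th)) zeta\<bar>)
               \<longlongrightarrow> 0) at_top
          \<and> ((\<lambda>zeta. zeta powr (-1 - 1 / th) *
                 \<bar>deriv (\<lambda>r. u r zeta) (sigma * zeta powr (-1 / th))
                  - deriv (\<lambda>r. ubar r zeta) (sigma * zeta powr (-1 / th))\<bar>)
               \<longlongrightarrow> 0) at_top" if sigma: "sigma > 0" for sigma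
  proof -
    obtain C where C: "C > 0" and CE: "\<And>e. 0 < e \<Longrightarrow> e \<le> 1 \<Longrightarrow> (\<forall>\<^sub>F z in at_top.
     (\<forall>t. 0 \<le> t \<and> t \<le> sigma * z powr (-1 / th) \<longrightarrow>
         \<bar>u t z - ubar t z\<bar> \<le> z * (C * (e + z powr (- ga))))
   \<and> z powr (-1 - 1 / th) *
       \<bar>deriv (\<lambda>r. u r z) (sigma * z powr (-1 / th))
        - deriv (\<lambda>r. ubar r z) (sigma * z powr (-1 / th))\<bar>
       \<le> C * (e + z powr (- ga)))"
      using ME[OF sigma] by blast
    have key: "\<forall>\<^sub>F z in at_top. z > 0 \<and> C * (min 1 (eta / (4 * C)) + z powr (- ga)) < eta \<and>
     (\<forall>t. 0 \<le> t \<and> t \<le> sigma * z powr (-1 / th) \<longrightarrow>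
         \<bar>u t z - ubar t z\<bar> \<le> z * (C * (min 1 (eta / (4 * C)) + z powr (- ga))))
   \<and> z powr (-1 - 1 / th) *
       \<bar>deriv (\<lambda>r. u r z) (sigma * z powr (-1 / th))
        - deriv (\<lambda>r. ubar r z) (sigma * z powr (-1 / th))\<bar>
       \<le> C * (min 1 (eta / (4 * C)) + z powr (- ga))" if eta: "eta > 0" for eta
    proof -
      have e: "0 < min 1 (eta / (4 * C))" "min 1 (eta / (4 * C)) \<le> 1" using eta C by auto
      have lt: "C * (min 1 (eta / (4 * C)) + g) < eta" if "g < eta / (4 * C)" for g
      proof -
        have "C * (min 1 (eta / (4 * C)) + g) < C * (eta / (4 * C) + eta / (4 * C))"
          using that C by (intro mult_strict_left_mono) auto
        also have "\<dots> = eta / 2" using C by (simp add: field_simps)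
        finally show ?thesis using eta by simp
      qed
      have g: "eta / (4 * C) > 0" using eta C by simp
      show ?thesis
        using eventually_conj[OF eventually_conj[OF CE[OF e] Gt[OF g]] eventually_gt_at_top[of 0]]
      proof (rule eventually_mono)
        fix z :: real
        assume H: "(((\<forall>t. 0 \<le> t \<and> t \<le> sigma * z powr (-1 / th) \<longrightarrow>
         \<bar>u t z - ubar t z\<bar> \<le> z * (C * (min 1 (eta / (4 * C)) + z powr (- ga))))
         \<and> z powr (-1 - 1 / th) *
       \<bar>deriv (\<lambda>r. u r z) (sigma * z powr (-1 / th))
        - deriv (\<lambda>r. ubar r z) (sigma * z powr (-1 / th))\<bar>
       \<le> C * (min 1 (eta / (4 * C)) + z powr (- ga))) \<and> z powr (- ga) < eta / (4 * C)) \<and> z > 0"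
        hence "C * (min 1 (eta / (4 * C)) + z powr (- ga)) < eta" using lt by blast
        with H show "z > 0 \<and> C * (min 1 (eta / (4 * C)) + z powr (- ga)) < eta \<and>
     (\<forall>t. 0 \<le> t \<and> t \<le> sigma * z powr (-1 / th) \<longrightarrow>
         \<bar>u t z - ubar t z\<bar> \<le> z * (C * (min 1 (eta / (4 * C)) + z powr (- ga))))
   \<and> z powr (-1 - 1 / th) *
       \<bar>deriv (\<lambda>r. u r z) (sigma * z powr (-1 / th))
        - deriv (\<lambda>r. ubar r z) (sigma * z powr (-1 / th))\<bar>
       \<le> C * (min 1 (eta / (4 * C)) + z powr (- ga))" by blast
      qed
    qed
    show ?thesis
    proof
      show "((\<lambda>zeta. zeta powr (-1) *
                 \<bar>u (sigma * zeta powr (-1 / th)) zeta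
                  - ubar (sigma * zeta powr (-1 / th)) zeta\<bar>) \<longlongrightarrow> 0) at_top"
      proof (rule tz)
        fix eta :: real assume eta: "eta > 0"
        show "\<forall>\<^sub>F z in at_top. \<bar>z powr (-1) * \<bar>u (sigma * z powr (-1 / th)) z - ubar (sigma * z powr (-1 / th)) z\<bar>\<bar> < eta"
          using key[OF eta]
        proof (rule eventually_mono)
          fix z assume H: "z > 0 \<and> C * (min 1 (eta / (4 * C)) + z powr (- ga)) < eta \<and>
             (\<forall>t. 0 \<le> t \<and> t \<le> sigma * z powr (-1 / th) \<longrightarrow>
                 \<bar>u t z - ubar t z\<bar> \<le> z * (C * (min 1 (eta / (4 * C)) + z powr (- ga))))
             \<and> z powr (-1 - 1 / th) *
               \<bar>deriv (\<lambda>r. u r z) (sigma * z powr (-1 / th))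
                - deriv (\<lambda>r. ubar r z) (sigma * z powr (-1 / th))\<bar>
               \<le> C * (min 1 (eta / (4 * C)) + z powr (- ga))"
          hence z: "z > 0" by blast
          have "\<bar>u (sigma * z powr (-1 / th)) z - ubar (sigma * z powr (-1 / th)) z\<bar>
              \<le> z * (C * (min 1 (eta / (4 * C)) + z powr (- ga)))"
            using H sigma by auto
          hence "z powr (-1) * \<bar>u (sigma * z powr (-1 / th)) z - ubar (sigma * z powr (-1 / th)) z\<bar>
              \<le> z powr (-1) * (z * (C * (min 1 (eta / (4 * C)) + z powr (- ga))))"
            by (intro mult_left_mono) auto
          also have "\<dots> = C * (min 1 (eta / (4 * C)) + z powr (- ga))"
            using z by (simp add: powr_minus_divide)
          finally show "\<bar>z powr (-1) * \<bar>u (sigma * z powr (-1 / th)) z - ubar (sigma * z powr (-1 / th)) z\<bar>\<bar> < eta"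
            using H by simp
        qed
      qed
      show "((\<lambda>zeta. zeta powr (-1 - 1 / th) *
                 \<bar>deriv (\<lambda>r. u r zeta) (sigma * zeta powr (-1 / th))
                  - deriv (\<lambda>r. ubar r zeta) (sigma * zeta powr (-1 / th))\<bar>) \<longlongrightarrow> 0) at_top"
      proof (rule tz)
        fix eta :: real assume eta: "eta > 0"
        show "\<forall>\<^sub>F z in at_top. \<bar>z powr (-1 - 1 / th) *
                 \<bar>deriv (\<lambda>r. u r z) (sigma * z powr (-1 / th))
                  - deriv (\<lambda>r. ubar r z) (sigma * z powr (-1 / th))\<bar>\<bar> < eta"
          using key[OF eta] by (rule eventually_mono) auto
      qed
    qed
  qed
  show ?thesis using partA partB unfolding th_def by blast
qed


end
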